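(* Let $\boldsymbol\xi=(\xi_1,\dots,\xi_n)$ be the indicator vector of the output of binary-tree pivotal sampling on a fixed full binary tree $T$ with leaves $[n]$ and leaf probabilities $q_1,\dots,q_n\in[0,1]$ with integer sum. Let $\mathcal S\subseteq[n]$ with $\Pr[\xi_\ell=1\ \forall\ell\in\mathcal S]>0$. Then the conditional distribution of $(\xi_j)_{j\in[n]\setminus\mathcal S}$ given $\{\xi_\ell=1\ \forall\ell\in\mathcal S\}$ is the joint distribution obtained by running binary-tree pivotal sampling independently on finitely many full binary trees whose leaf sets partition $[n]\setminus\mathcal S$, with suitable leaf probabilities.
   Context: Binary-tree pivotal sampling: let $T$ be a full binary tree whose leaves are identified with an index set, and let $q_i\in[0,1]$ be leaf probabilities with integer sum. Each node can store an index together with a current probability; initially each leaf $i$ stores $i$ with probability $q_i$, and the output set $\mathcal S_{\rm out}$ is empty. Repeatedly choose two sibling nodes that both store indices, say $i$ with probability $q_i$ and $j$ with probability $q_j$, with parent $P$, and remove them. If $q_i+q_j\le1$: with probability $q_i/(q_i+q_j)$ store $i$ at $P$ with probability $q_i+q_j$ ($j$ is rejected), otherwise store $j$ at $P$ with probability $q_i+q_j$ ($i$ is rejected). If $q_i+q_j>1$: with probability $(1-q_i)/(2-q_i-q_j)$ put $j$ into $\mathcal S_{\rm out}$ and store $i$ at $P$ with probability $q_i+q_j-1$; otherwise put $i$ into $\mathcal S_{\rm out}$ and store $j$ at $P$ with probability $q_i+q_j-1$. When only the root stores an index, put it into $\mathcal S_{\rm out}$ iff its probability is $1$. *)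

theory Defs
  imports "HOL-Probability.Probability_Mass_Function"
begin

datatype 'a btree = Lf 'a | Nd "'a btree" "'a btree"

fun leaves :: "'a btree \<Rightarrow> 'a list" where
  "leaves (Lf i) = [i]"
| "leaves (Nd l r) = leaves l @ leaves r"

text \<open>A node state: (stored index, its current probability, output produced so far in the subtree).
  One pivotal step merging two sibling states into their parent.\<close>
definition pivot_merge ::
  "('a \<times> real \<times> 'a set) \<Rightarrow> ('a \<times> real \<times> 'a set) \<Rightarrow> ('a \<times> real \<times> 'a set) pmf" where
  "pivot_merge x y = (case x of (i, qi, Si) \<Rightarrow> case y of (j, qj, Sj) \<Rightarrow>
     (if qi + qj \<le> 1 then
        map_pmf (\<lambda>b. if b then (i, qi + qj, Si \<union> Sj) else (j, qi + qj, Si \<union> Sj))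
          (bernoulli_pmf (qi / (qi + qj)))
      else
        map_pmf (\<lambda>b. if b then (i, qi + qj - 1, insert j (Si \<union> Sj))
                           else (j, qi + qj - 1, insert i (Si \<union> Sj)))
          (bernoulli_pmf ((1 - qi) / (2 - qi - qj)))))"

text \<open>Running the procedure on a subtree: distribution of the root state.
  Disjoint subtrees evolve independently, so the order of sibling merges is irrelevant.\<close>
fun pivot_run :: "('a \<Rightarrow> real) \<Rightarrow> 'a btree \<Rightarrow> ('a \<times> real \<times> 'a set) pmf" where
  "pivot_run q (Lf i) = return_pmf (i, q i, {})"
| "pivot_run q (Nd l r) =
     bind_pmf (pivot_run q l) (\<lambda>x. bind_pmf (pivot_run q r) (\<lambda>y. pivot_merge x y))"

definition pivotal_sampling :: "('a \<Rightarrow> real) \<Rightarrow> 'a btree \<Rightarrow> 'a set pmf" where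
  "pivotal_sampling q T =
     map_pmf (\<lambda>(i, p, S). if p = 1 then insert i S else S) (pivot_run q T)"

fun pivotal_forest :: "('a \<Rightarrow> real) \<Rightarrow> 'a btree list \<Rightarrow> 'a set pmf" where
  "pivotal_forest q [] = return_pmf {}"
| "pivotal_forest q (t # ts) =
     bind_pmf (pivotal_sampling q t) (\<lambda>A. bind_pmf (pivotal_forest q ts) (\<lambda>B. return_pmf (A \<union> B)))"

end

theory Submission
  imports Defs
begin

datatype rt = RL nat | RN bool real rt rt

fun rleaves :: "rt \<Rightarrow> nat set" where
  "rleaves (RL i) = {i}"
| "rleaves (RN t r a b) = rleaves a \<union> rleaves b"

fun rvalid :: "rt \<Rightarrow> bool" where
  "rvalid (RL i) = True"
| "rvalid (RN t r a b) = (0 \<le> r \<and> r \<le> 1 \<and> rleaves a \<inter> rleaves b = {} \<and> rvalid a \<and> rvalid b)"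

definition uni :: "nat set pmf \<Rightarrow> nat set pmf \<Rightarrow> nat set pmf" where
  "uni X Y = bind_pmf X (\<lambda>A. bind_pmf Y (\<lambda>B. return_pmf (A \<union> B)))"

fun LoR :: "rt \<Rightarrow> nat set pmf" and HiR :: "rt \<Rightarrow> nat set pmf" where
  "LoR (RL i) = return_pmf {}"
| "LoR (RN t r a b) = (if t then uni (LoR a) (LoR b)
      else bind_pmf (bernoulli_pmf r) (\<lambda>c. if c then uni (LoR a) (HiR b) else uni (HiR a) (LoR b)))"
| "HiR (RL i) = return_pmf {i}"
| "HiR (RN t r a b) = (if t then bind_pmf (bernoulli_pmf r) (\<lambda>c. if c then uni (HiR a) (LoR b) else uni (LoR a) (HiR b))
      else uni (HiR a) (HiR b))"

fun Pq :: "(nat \<Rightarrow> real) \<Rightarrow> nat btree \<Rightarrow> real" where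
  "Pq q (Lf i) = q i"
| "Pq q (Nd a b) = (if Pq q a + Pq q b \<le> 1 then Pq q a + Pq q b else Pq q a + Pq q b - 1)"

fun rt_of :: "(nat \<Rightarrow> real) \<Rightarrow> nat btree \<Rightarrow> rt" where
  "rt_of q (Lf i) = RL i"
| "rt_of q (Nd a b) = (if Pq q a + Pq q b \<le> 1
      then RN True (Pq q a / (Pq q a + Pq q b)) (rt_of q a) (rt_of q b)
      else RN False ((1 - Pq q a) / (2 - Pq q a - Pq q b)) (rt_of q a) (rt_of q b))"

lemma merge_expl:
  fixes x y :: "nat \<times> real \<times> nat set"
  assumes "fst (snd x) = pa" "fst (snd y) = pb"
  shows "pivot_merge x y = (if pa + pb \<le> 1 then
        map_pmf (\<lambda>c. (if c then fst x else fst y, pa + pb, snd (snd x) \<union> snd (snd y)))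
          (bernoulli_pmf (pa / (pa + pb)))
      else
        map_pmf (\<lambda>c. (if c then fst x else fst y, pa + pb - 1, insert (if c then fst y else fst x) (snd (snd x) \<union> snd (snd y))))
          (bernoulli_pmf ((1 - pa) / (2 - pa - pb))))"
proof -
  obtain i p1 Si where x: "x = (i, p1, Si)" by (cases x) auto
  obtain j p2 Sj where y: "y = (j, p2, Sj)" by (cases y) auto
  show ?thesis using assms unfolding x y pivot_merge_def 
    by (auto intro!: map_pmf_cong)
qed

lemma bind_bind_map_comm:
  "bind_pmf X (\<lambda>x. bind_pmf Y (\<lambda>y. map_pmf (F x y) B)) =
   bind_pmf B (\<lambda>c. bind_pmf X (\<lambda>x. bind_pmf Y (\<lambda>y. return_pmf (F x y c))))"
  unfolding map_pmf_def
  apply (subst bind_commute_pmf[of Y])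
  apply (subst bind_commute_pmf[of X])
  apply simp
  done

lemma uni_map: "uni (map_pmf f X) (map_pmf g Y) = bind_pmf X (\<lambda>x. bind_pmf Y (\<lambda>y. return_pmf (f x \<union> g y)))"
  unfolding uni_def by (simp add: bind_map_pmf)

lemma ins_if_swap: "(\<lambda>c. insert (if c then a else b) (insert (if c then b else a) S)) = (\<lambda>c. insert b (insert a S))"
  by (rule ext) auto

lemma run_main:
  "(\<forall>x\<in>set_pmf (pivot_run q T). fst (snd x) = Pq q T) \<and>
   map_pmf (\<lambda>x. snd (snd x)) (pivot_run q T) = LoR (rt_of q T) \<and>
   map_pmf (\<lambda>x. insert (fst x) (snd (snd x))) (pivot_run q T) = HiR (rt_of q T)"
proof (induction T)
  case (Lf i)
  then show ?case by simp
next
  case (Nd a b)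
  let ?Ra = "pivot_run q a" and ?Rb = "pivot_run q b"
  define pa where "pa = Pq q a"
  define pb where "pb = Pq q b"
  have sa: "\<And>x. x \<in> set_pmf ?Ra \<Longrightarrow> fst (snd x) = pa" using Nd.IH(1) pa_def by blast
  have sb: "\<And>x. x \<in> set_pmf ?Rb \<Longrightarrow> fst (snd x) = pb" using Nd.IH(2) pb_def by blast
  let ?L = "\<lambda>x::nat \<times> real \<times> nat set. snd (snd x)"
  let ?H = "\<lambda>x::nat \<times> real \<times> nat set. insert (fst x) (snd (snd x))"
  have LoA: "map_pmf ?L ?Ra = LoR (rt_of q a)" and HiA: "map_pmf ?H ?Ra = HiR (rt_of q a)"
   and LoB: "map_pmf ?L ?Rb = LoR (rt_of q b)" and HiB: "map_pmf ?H ?Rb = HiR (rt_of q b)"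
    using Nd.IH by auto
  show ?case
  proof (cases "pa + pb \<le> 1")
    case True
    define M where "M = (\<lambda>(x::nat \<times> real \<times> nat set) (y::nat \<times> real \<times> nat set). map_pmf (\<lambda>c. (if c then fst x else fst y, pa + pb, snd (snd x) \<union> snd (snd y)))
          (bernoulli_pmf (pa / (pa + pb))))"
    have run: "pivot_run q (Nd a b) = bind_pmf ?Ra (\<lambda>x. bind_pmf ?Rb (\<lambda>y. M x y))"
      unfolding pivot_run.simps
      by (intro bind_pmf_cong refl) (simp add: merge_expl[OF sa sb] True M_def)
    have rt: "rt_of q (Nd a b) = RN True (pa / (pa + pb)) (rt_of q a) (rt_of q b)"
      using True by (simp add: pa_def pb_def)
    have P: "Pq q (Nd a b) = pa + pb" using True by (simp add: pa_def pb_def)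
    have 1: "\<forall>x\<in>set_pmf (pivot_run q (Nd a b)). fst (snd x) = Pq q (Nd a b)"
      unfolding run P M_def by auto
    have 2: "map_pmf ?L (pivot_run q (Nd a b)) = LoR (rt_of q (Nd a b))"
      unfolding run rt M_def
      by (simp add: map_bind_pmf pmf.map_comp o_def LoA[symmetric] LoB[symmetric] uni_map map_pmf_const)
    have 3: "map_pmf ?H (pivot_run q (Nd a b)) = HiR (rt_of q (Nd a b))"
      unfolding run rt M_def
      apply (simp add: map_bind_pmf pmf.map_comp o_def)
      apply (subst bind_bind_map_comm)
      apply (rule bind_pmf_cong[OF refl])
      apply (simp only: LoA[symmetric] LoB[symmetric] HiA[symmetric] HiB[symmetric] uni_map)
      apply (auto intro!: bind_pmf_cong)
      done
    show ?thesis using 1 2 3 by blast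
  next
    case False
    define M where "M = (\<lambda>(x::nat \<times> real \<times> nat set) (y::nat \<times> real \<times> nat set). map_pmf (\<lambda>c. (if c then fst x else fst y, pa + pb - 1, insert (if c then fst y else fst x) (snd (snd x) \<union> snd (snd y))))
          (bernoulli_pmf ((1 - pa) / (2 - pa - pb))))"
    have run: "pivot_run q (Nd a b) = bind_pmf ?Ra (\<lambda>x. bind_pmf ?Rb (\<lambda>y. M x y))"
      unfolding pivot_run.simps
      by (intro bind_pmf_cong refl) (simp add: merge_expl[OF sa sb] False M_def)
    have rt: "rt_of q (Nd a b) = RN False ((1 - pa) / (2 - pa - pb)) (rt_of q a) (rt_of q b)"
      using False by (simp add: pa_def pb_def)
    have P: "Pq q (Nd a b) = pa + pb - 1" using False by (simp add: pa_def pb_def)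
    have 1: "\<forall>x\<in>set_pmf (pivot_run q (Nd a b)). fst (snd x) = Pq q (Nd a b)"
      unfolding run P M_def by auto
    have 2: "map_pmf ?L (pivot_run q (Nd a b)) = LoR (rt_of q (Nd a b))"
      unfolding run rt M_def
      apply (simp add: map_bind_pmf pmf.map_comp o_def)
      apply (subst bind_bind_map_comm)
      apply (rule bind_pmf_cong[OF refl])
      apply (simp only: LoA[symmetric] LoB[symmetric] HiA[symmetric] HiB[symmetric] uni_map)
      apply (auto intro!: bind_pmf_cong)
      done
    have 3: "map_pmf ?H (pivot_run q (Nd a b)) = HiR (rt_of q (Nd a b))"
      unfolding run rt M_def
      by (simp add: map_bind_pmf pmf.map_comp o_def HiA[symmetric] HiB[symmetric] uni_map ins_if_swap map_pmf_const)
    show ?thesis using 1 2 3 by blast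
  qed
qed

lemma pivotal_rt: "pivotal_sampling q T = (if Pq q T = 1 then HiR (rt_of q T) else LoR (rt_of q T))"
proof -
  have s: "\<forall>x\<in>set_pmf (pivot_run q T). fst (snd x) = Pq q T" using run_main by blast
  have "pivotal_sampling q T = map_pmf (if Pq q T = 1 then (\<lambda>x. insert (fst x) (snd (snd x))) else (\<lambda>x. snd (snd x))) (pivot_run q T)"
    unfolding pivotal_sampling_def using s by (intro map_pmf_cong refl) auto
  then show ?thesis using run_main[of q T] by (auto split: if_splits)
qed

lemma set_uni: "set_pmf (uni X Y) = {A \<union> B | A B. A \<in> set_pmf X \<and> B \<in> set_pmf Y}"
  unfolding uni_def by auto

lemma set_bern_sub: "set_pmf (bind_pmf (bernoulli_pmf r) (\<lambda>c. if c then X else Y)) \<subseteq> set_pmf X \<union> set_pmf Y"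
proof
  fix x assume "x \<in> set_pmf (bind_pmf (bernoulli_pmf r) (\<lambda>c. if c then X else Y))"
  then obtain c where "x \<in> set_pmf (if c then X else Y)" by auto
  then show "x \<in> set_pmf X \<union> set_pmf Y" by (cases c) auto
qed

lemma set_uni_sub: "(\<forall>A\<in>set_pmf X. A \<subseteq> L1) \<Longrightarrow> (\<forall>A\<in>set_pmf Y. A \<subseteq> L2) \<Longrightarrow> \<forall>A\<in>set_pmf (uni X Y). A \<subseteq> L1 \<union> L2"
  unfolding set_uni by blast

lemma set_LH: "(\<forall>A\<in>set_pmf (LoR R). A \<subseteq> rleaves R) \<and> (\<forall>A\<in>set_pmf (HiR R). A \<subseteq> rleaves R)"
proof (induction R)
  case (RL x)
  then show ?case by simp
next
  case (RN t r a b)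
  have u1: "\<forall>A\<in>set_pmf (uni (LoR a) (LoR b)). A \<subseteq> rleaves a \<union> rleaves b"
    using set_uni_sub[of "LoR a" "rleaves a" "LoR b" "rleaves b"] RN.IH by blast
  have u2: "\<forall>A\<in>set_pmf (uni (LoR a) (HiR b)). A \<subseteq> rleaves a \<union> rleaves b"
    using set_uni_sub[of "LoR a" "rleaves a" "HiR b" "rleaves b"] RN.IH by blast
  have u3: "\<forall>A\<in>set_pmf (uni (HiR a) (LoR b)). A \<subseteq> rleaves a \<union> rleaves b"
    using set_uni_sub[of "HiR a" "rleaves a" "LoR b" "rleaves b"] RN.IH by blast
  have u4: "\<forall>A\<in>set_pmf (uni (HiR a) (HiR b)). A \<subseteq> rleaves a \<union> rleaves b"
    using set_uni_sub[of "HiR a" "rleaves a" "HiR b" "rleaves b"] RN.IH by blast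
  show ?case
  proof (cases t)
    case True
    then show ?thesis using u1 u2 u3 set_bern_sub[of r "uni (HiR a) (LoR b)" "uni (LoR a) (HiR b)"] by auto
  next
    case False
    then show ?thesis using u2 u3 u4 set_bern_sub[of r "uni (LoR a) (HiR b)" "uni (HiR a) (LoR b)"] by auto
  qed
qed

lemma set_LoR: "A \<in> set_pmf (LoR R) \<Longrightarrow> A \<subseteq> rleaves R" using set_LH by blast
lemma set_HiR: "A \<in> set_pmf (HiR R) \<Longrightarrow> A \<subseteq> rleaves R" using set_LH by blast

lemma uni_pair: "uni X Y = map_pmf (\<lambda>(A, B). A \<union> B) (pair_pmf X Y)"
  unfolding uni_def pair_pmf_def by (simp add: map_bind_pmf)

lemma pmf_uni:
  assumes X: "\<And>A. A \<in> set_pmf X \<Longrightarrow> A \<subseteq> LX" and Y: "\<And>A. A \<in> set_pmf Y \<Longrightarrow> A \<subseteq> LY"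
    and d: "LX \<inter> LY = {}"
  shows "pmf (uni X Y) C = (if C \<subseteq> LX \<union> LY then pmf X (C \<inter> LX) * pmf Y (C \<inter> LY) else 0)"
proof -
  let ?f = "\<lambda>(A::nat set, B::nat set). A \<union> B"
  let ?P = "pair_pmf X Y"
  have "pmf (uni X Y) C = measure ?P (?f -` {C})" unfolding uni_pair pmf_map ..
  also have "\<dots> = measure ?P (?f -` {C} \<inter> set_pmf ?P)" by (simp only: measure_Int_set_pmf)
  finally have eq: "pmf (uni X Y) C = measure ?P (?f -` {C} \<inter> set_pmf ?P)" .
  show ?thesis
  proof (cases "C \<subseteq> LX \<union> LY")
    case True
    have "?f -` {C} \<inter> set_pmf ?P = {(C \<inter> LX, C \<inter> LY)} \<inter> set_pmf ?P"
    proof (intro equalityI subsetI)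
      fix z assume z: "z \<in> ?f -` {C} \<inter> set_pmf ?P"
      obtain A B where zAB: "z = (A, B)" by (cases z)
      have AX: "A \<subseteq> LX" and BY: "B \<subseteq> LY" and C: "A \<union> B = C"
        using z X Y unfolding zAB by auto
      have "A = C \<inter> LX" "B = C \<inter> LY" using AX BY C d by blast+
      then show "z \<in> {(C \<inter> LX, C \<inter> LY)} \<inter> set_pmf ?P" using z zAB by simp
    next
      fix z assume z: "z \<in> {(C \<inter> LX, C \<inter> LY)} \<inter> set_pmf ?P"
      then have "z = (C \<inter> LX, C \<inter> LY)" by simp
      then show "z \<in> ?f -` {C} \<inter> set_pmf ?P" using z True by auto
    qed
    then have "pmf (uni X Y) C = measure ?P {(C \<inter> LX, C \<inter> LY)}"
      using eq by (simp only: measure_Int_set_pmf)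
    then show ?thesis using True by (simp add: measure_pmf_single pmf_pair)
  next
    case False
    have "?f -` {C} \<inter> set_pmf ?P = {}"
    proof (rule ccontr)
      assume "?f -` {C} \<inter> set_pmf ?P \<noteq> {}"
      then obtain A B where "(A, B) \<in> ?f -` {C} \<inter> set_pmf ?P" by auto
      then have "A \<subseteq> LX" "B \<subseteq> LY" "A \<union> B = C" using X Y by auto
      then show False using False by blast
    qed
    then show ?thesis using eq False by simp
  qed
qed

lemma pmf_bern_mix:
  assumes "0 \<le> r" "r \<le> 1"
  shows "pmf (bind_pmf (bernoulli_pmf r) (\<lambda>c. if c then X else Y)) A = r * pmf X A + (1 - r) * pmf Y A"
  using assms by (simp add: pmf_bind)

definition lo :: "rt \<Rightarrow> nat set \<Rightarrow> real" where "lo R A = pmf (LoR R) A"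
definition hi :: "rt \<Rightarrow> nat set \<Rightarrow> real" where "hi R A = pmf (HiR R) A"

lemma lo_RL: "lo (RL i) A = (if A = {} then 1 else 0)" by (simp add: lo_def)
lemma hi_RL: "hi (RL i) A = (if A = {i} then 1 else 0)" by (simp add: hi_def)

lemma lo_RN:
  assumes "rvalid (RN t r a b)"
  shows "lo (RN t r a b) A = (if A \<subseteq> rleaves a \<union> rleaves b then
     (if t then lo a (A \<inter> rleaves a) * lo b (A \<inter> rleaves b)
      else r * (lo a (A \<inter> rleaves a) * hi b (A \<inter> rleaves b)) + (1 - r) * (hi a (A \<inter> rleaves a) * lo b (A \<inter> rleaves b)))
     else 0)"
  using assms unfolding lo_def hi_def
  by (simp add: pmf_bern_mix pmf_uni[OF set_LoR set_LoR] pmf_uni[OF set_LoR set_HiR] pmf_uni[OF set_HiR set_LoR])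

lemma hi_RN:
  assumes "rvalid (RN t r a b)"
  shows "hi (RN t r a b) A = (if A \<subseteq> rleaves a \<union> rleaves b then
     (if t then r * (hi a (A \<inter> rleaves a) * lo b (A \<inter> rleaves b)) + (1 - r) * (lo a (A \<inter> rleaves a) * hi b (A \<inter> rleaves b))
      else hi a (A \<inter> rleaves a) * hi b (A \<inter> rleaves b))
     else 0)"
  using assms unfolding lo_def hi_def
  by (simp add: pmf_bern_mix pmf_uni[OF set_HiR set_HiR] pmf_uni[OF set_LoR set_HiR] pmf_uni[OF set_HiR set_LoR])

lemma lo_out: "\<not> A \<subseteq> rleaves R \<Longrightarrow> lo R A = 0"
  unfolding lo_def using set_LoR by (meson pmf_eq_0_set_pmf)
lemma hi_out: "\<not> A \<subseteq> rleaves R \<Longrightarrow> hi R A = 0"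
  unfolding hi_def using set_HiR by (meson pmf_eq_0_set_pmf)
lemma lo_nonneg: "0 \<le> lo R A" by (simp add: lo_def)
lemma hi_nonneg: "0 \<le> hi R A" by (simp add: hi_def)

definition Kp :: "nat \<Rightarrow> rt \<Rightarrow> rt \<Rightarrow> real \<Rightarrow> real \<Rightarrow> bool" where
  "Kp l R R' lam eta \<longleftrightarrow> rvalid R' \<and> rleaves R' = rleaves R - {l} \<and> 0 \<le> lam \<and> 0 \<le> eta \<and>
     (\<forall>A. l \<notin> A \<longrightarrow> lo R (insert l A) = lam * lo R' A) \<and>
     ((\<forall>A. l \<notin> A \<longrightarrow> hi R (insert l A) = eta * hi R' A) \<or>
      (lam = 0 \<and> (\<forall>A. l \<notin> A \<longrightarrow> hi R (insert l A) = eta * lo R' A)))"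

lemma mix_eq:
  fixes e r' c1 c2 X Y :: real
  assumes "e * r' = c1" "e * (1 - r') = c2"
  shows "e * (r' * X + (1 - r') * Y) = c1 * X + c2 * Y"
proof -
  have "e * (r' * X + (1 - r') * Y) = (e * r') * X + (e * (1 - r')) * Y"
    by (simp only: distrib_left mult.assoc)
  then show ?thesis using assms by simp
qed

lemma KpI1:
  assumes "rvalid R'" "rleaves R' = rleaves R - {l}" "0 \<le> lam" "0 \<le> eta"
    "\<And>A. l \<notin> A \<Longrightarrow> lo R (insert l A) = lam * lo R' A"
    "\<And>A. l \<notin> A \<Longrightarrow> hi R (insert l A) = eta * hi R' A"
  shows "Kp l R R' lam eta"
  using assms unfolding Kp_def by blast

lemma KpI2:
  assumes "rvalid R'" "rleaves R' = rleaves R - {l}" "0 \<le> eta"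
    "\<And>A. l \<notin> A \<Longrightarrow> lo R (insert l A) = 0"
    "\<And>A. l \<notin> A \<Longrightarrow> hi R (insert l A) = eta * lo R' A"
  shows "Kp l R R' 0 eta"
  using assms unfolding Kp_def by simp

lemma K_step:
  assumes v: "rvalid (RN t r a b)" and la: "l \<in> rleaves a"
    and K: "Kp l a a' la ea"
  shows "\<exists>R' lam eta. Kp l (RN t r a b) R' lam eta"
proof -
  let ?La = "rleaves a" and ?Lb = "rleaves b" and ?La' = "rleaves a'"
  have r01: "0 \<le> r" "r \<le> 1" and dj: "?La \<inter> ?Lb = {}" and va: "rvalid a" and vb: "rvalid b" using v by auto
  have va': "rvalid a'" and La': "?La' = ?La - {l}" and la0: "0 \<le> la" and ea0: "0 \<le> ea"
    and Klo: "\<And>A. l \<notin> A \<Longrightarrow> lo a (insert l A) = la * lo a' A"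
    using K unfolding Kp_def by auto
  have lb: "l \<notin> ?Lb" using la dj by auto
  have dj': "?La' \<inter> ?Lb = {}" using La' dj by auto
  have key1: "\<And>A. l \<notin> A \<Longrightarrow> (insert l A \<subseteq> ?La \<union> ?Lb) = (A \<subseteq> ?La' \<union> ?Lb)" using La' la by auto
  have key2: "\<And>A. l \<notin> A \<Longrightarrow> insert l A \<inter> ?La = insert l (A \<inter> ?La')" using La' la by auto
  have key3: "\<And>A. l \<notin> A \<Longrightarrow> insert l A \<inter> ?Lb = A \<inter> ?Lb" using lb by auto
  have nl: "\<And>A. l \<notin> A \<inter> ?La'" using La' by auto
  have leaves: "\<And>t' r'. rleaves (RN t' r' a' b) = rleaves (RN t r a b) - {l}" using La' lb by auto
  have vR': "\<And>t' r'. 0 \<le> r' \<Longrightarrow> r' \<le> 1 \<Longrightarrow> rvalid (RN t' r' a' b)" using va' vb dj' by auto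
  define X where "X = (\<lambda>A. hi a' (A \<inter> ?La') * lo b (A \<inter> ?Lb))"
  define Y where "Y = (\<lambda>A. lo a' (A \<inter> ?La') * hi b (A \<inter> ?Lb))"
  define U where "U = (\<lambda>A. lo a' (A \<inter> ?La') * lo b (A \<inter> ?Lb))"
  define W where "W = (\<lambda>A. hi a' (A \<inter> ?La') * hi b (A \<inter> ?Lb))"
  define C where "C = (\<lambda>A. A \<subseteq> ?La' \<union> ?Lb)"
  have loR': "lo (RN t' r' a' b) A = (if C A then (if t' then U A else r' * Y A + (1 - r') * X A) else 0)"
    if "0 \<le> r'" "r' \<le> 1" for t' r' A
    unfolding C_def U_def X_def Y_def lo_RN[OF vR'[OF that]] by simp
  have hiR': "hi (RN t' r' a' b) A = (if C A then (if t' then r' * X A + (1 - r') * Y A else W A) else 0)"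
    if "0 \<le> r'" "r' \<le> 1" for t' r' A
    unfolding C_def W_def X_def Y_def hi_RN[OF vR'[OF that]] by simp
  have loI: "lo (RN t r a b) (insert l A) = (if C A then
     (if t then lo a (insert l (A \<inter> ?La')) * lo b (A \<inter> ?Lb)
      else r * (lo a (insert l (A \<inter> ?La')) * hi b (A \<inter> ?Lb)) + (1 - r) * (hi a (insert l (A \<inter> ?La')) * lo b (A \<inter> ?Lb)))
     else 0)"
    if A: "l \<notin> A" for A unfolding C_def by (simp only: lo_RN[OF v] key1[OF A] key2[OF A] key3[OF A])
  have hiI: "hi (RN t r a b) (insert l A) = (if C A then
     (if t then r * (hi a (insert l (A \<inter> ?La')) * lo b (A \<inter> ?Lb)) + (1 - r) * (lo a (insert l (A \<inter> ?La')) * hi b (A \<inter> ?Lb))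
      else hi a (insert l (A \<inter> ?La')) * hi b (A \<inter> ?Lb))
     else 0)"
    if A: "l \<notin> A" for A unfolding C_def by (simp only: hi_RN[OF v] key1[OF A] key2[OF A] key3[OF A])
  have loa: "\<And>A. lo a (insert l (A \<inter> ?La')) = la * lo a' (A \<inter> ?La')" using Klo nl by blast
  from K consider (clean) "\<And>A. l \<notin> A \<Longrightarrow> hi a (insert l A) = ea * hi a' A"
    | (B) "la = 0" "\<And>A. l \<notin> A \<Longrightarrow> hi a (insert l A) = ea * lo a' A"
    unfolding Kp_def by blast
  then show ?thesis
  proof cases
    case clean
    have hia: "\<And>A. hi a (insert l (A \<inter> ?La')) = ea * hi a' (A \<inter> ?La')" using clean nl by blast
    show ?thesis
    proof (cases t)
      case True
      define eta where "eta = r * ea + (1 - r) * la"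
      define r' where "r' = r * ea / eta"
      have eta0: "0 \<le> eta" unfolding eta_def using r01 la0 ea0 by simp
      have e1: "eta * r' = r * ea" and e2: "eta * (1 - r') = (1 - r) * la"
      proof -
        show "eta * r' = r * ea"
        proof (cases "eta = 0")
          case True
          have "0 \<le> r * ea" "0 \<le> (1 - r) * la" using r01 la0 ea0 by simp_all
          then have "r * ea = 0" using True unfolding eta_def by linarith
          then show ?thesis using True by simp
        qed (simp add: r'_def)
        then show "eta * (1 - r') = (1 - r) * la" by (simp add: eta_def algebra_simps)
      qed
      have r'01: "0 \<le> r'" "r' \<le> 1"
      proof -
        have t1: "0 \<le> r * ea" "0 \<le> (1 - r) * la" using r01 la0 ea0 by simp_all
        show "0 \<le> r'" unfolding r'_def using t1 eta0 by simp
        show "r' \<le> 1"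
        proof (cases "eta = 0")
          case False
          then have "eta > 0" using eta0 by simp
          moreover have "r * ea \<le> eta" unfolding eta_def using t1 by simp
          ultimately show ?thesis unfolding r'_def by simp
        qed (simp add: r'_def)
      qed
      have "Kp l (RN t r a b) (RN True r' a' b) la eta"
      proof (rule KpI1[OF vR'[OF r'01] leaves la0 eta0])
        fix A assume A: "l \<notin> A"
        show "lo (RN t r a b) (insert l A) = la * lo (RN True r' a' b) A"
          unfolding loI[OF A] loR'[OF r'01] using True by (simp add: loa U_def)
        have "hi (RN t r a b) (insert l A) = (if C A then r * ea * X A + (1 - r) * la * Y A else 0)"
          unfolding hiI[OF A] using True by (simp add: loa hia X_def Y_def)
        then show "hi (RN t r a b) (insert l A) = eta * hi (RN True r' a' b) A"
          unfolding hiR'[OF r'01] using mix_eq[OF e1 e2] by simp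
      qed
      then show ?thesis by blast
    next
      case False
      define lam where "lam = r * la + (1 - r) * ea"
      define r' where "r' = r * la / lam"
      have lam0: "0 \<le> lam" unfolding lam_def using r01 la0 ea0 by simp
      have e1: "lam * r' = r * la" and e2: "lam * (1 - r') = (1 - r) * ea"
      proof -
        show "lam * r' = r * la"
        proof (cases "lam = 0")
          case True
          have "0 \<le> r * la" "0 \<le> (1 - r) * ea" using r01 la0 ea0 by simp_all
          then have "r * la = 0" using True unfolding lam_def by linarith
          then show ?thesis using True by simp
        qed (simp add: r'_def)
        then show "lam * (1 - r') = (1 - r) * ea" by (simp add: lam_def algebra_simps)
      qed
      have r'01: "0 \<le> r'" "r' \<le> 1"
      proof -
        have t1: "0 \<le> r * la" "0 \<le> (1 - r) * ea" using r01 la0 ea0 by simp_all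
        show "0 \<le> r'" unfolding r'_def using t1 lam0 by simp
        show "r' \<le> 1"
        proof (cases "lam = 0")
          case False
          then have "lam > 0" using lam0 by simp
          moreover have "r * la \<le> lam" unfolding lam_def using t1 by simp
          ultimately show ?thesis unfolding r'_def by simp
        qed (simp add: r'_def)
      qed
      have "Kp l (RN t r a b) (RN False r' a' b) lam ea"
      proof (rule KpI1[OF vR'[OF r'01] leaves lam0 ea0])
        fix A assume A: "l \<notin> A"
        have "lo (RN t r a b) (insert l A) = (if C A then r * la * Y A + (1 - r) * ea * X A else 0)"
          unfolding loI[OF A] using False by (simp add: loa hia X_def Y_def)
        then show "lo (RN t r a b) (insert l A) = lam * lo (RN False r' a' b) A"
          unfolding loR'[OF r'01] using mix_eq[OF e1 e2] False by simp
        show "hi (RN t r a b) (insert l A) = ea * hi (RN False r' a' b) A"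
          unfolding hiI[OF A] hiR'[OF r'01] using False by (simp add: hia W_def)
      qed
      then show ?thesis by blast
    qed
  next
    case B
    have hia: "\<And>A. hi a (insert l (A \<inter> ?La')) = ea * lo a' (A \<inter> ?La')" using B(2) nl by blast
    have z01: "0 \<le> (0::real)" "(0::real) \<le> 1" by auto
    show ?thesis
    proof (cases t)
      case True
      have "Kp l (RN t r a b) (RN True 0 a' b) 0 (r * ea)"
      proof (rule KpI2[OF vR'[OF z01] leaves])
        show "0 \<le> r * ea" using r01 ea0 by simp
        fix A assume A: "l \<notin> A"
        show "lo (RN t r a b) (insert l A) = 0"
          unfolding loI[OF A] using True by (simp add: loa B(1))
        show "hi (RN t r a b) (insert l A) = r * ea * lo (RN True 0 a' b) A"
          unfolding hiI[OF A] loR'[OF z01] using True by (simp add: loa hia B(1) U_def)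
      qed
      then show ?thesis by blast
    next
      case False
      have "Kp l (RN t r a b) (RN True 0 a' b) ((1 - r) * ea) ea"
      proof (rule KpI1[OF vR'[OF z01] leaves])
        show "0 \<le> (1 - r) * ea" "0 \<le> ea" using r01 ea0 by simp_all
        fix A assume A: "l \<notin> A"
        show "lo (RN t r a b) (insert l A) = (1 - r) * ea * lo (RN True 0 a' b) A"
          unfolding loI[OF A] loR'[OF z01] using False by (simp add: loa hia B(1) U_def)
        show "hi (RN t r a b) (insert l A) = ea * hi (RN True 0 a' b) A"
          unfolding hiI[OF A] hiR'[OF z01] using False by (simp add: loa hia B(1) Y_def)
      qed
      then show ?thesis by blast
    qed
  qed
qed

lemma mirror:
  assumes v: "rvalid (RN t r a b)"
  shows "rvalid (RN t (1 - r) b a)" "rleaves (RN t (1 - r) b a) = rleaves (RN t r a b)"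
    "lo (RN t r a b) A = lo (RN t (1 - r) b a) A" "hi (RN t r a b) A = hi (RN t (1 - r) b a) A"
proof -
  show v2: "rvalid (RN t (1 - r) b a)" using v by auto
  show "rleaves (RN t (1 - r) b a) = rleaves (RN t r a b)" by auto
  have u: "(A \<subseteq> rleaves b \<union> rleaves a) = (A \<subseteq> rleaves a \<union> rleaves b)" by auto
  show "lo (RN t r a b) A = lo (RN t (1 - r) b a) A"
    unfolding lo_RN[OF v] lo_RN[OF v2] u by (simp add: algebra_simps)
  show "hi (RN t r a b) A = hi (RN t (1 - r) b a) A"
    unfolding hi_RN[OF v] hi_RN[OF v2] u by (simp add: algebra_simps)
qed

lemma Kp_cong:
  assumes "\<And>A. lo R A = lo S A" "\<And>A. hi R A = hi S A" "rleaves R = rleaves S" "Kp l S R' lam eta"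
  shows "Kp l R R' lam eta"
  using assms unfolding Kp_def by simp

lemma K_base:
  assumes v: "rvalid (RN t r (RL l) b)"
  shows "\<exists>R' lam eta. Kp l (RN t r (RL l) b) R' lam eta"
proof -
  have r01: "0 \<le> r" "r \<le> 1" and lb: "l \<notin> rleaves b" and vb: "rvalid b" using v by auto
  have key1: "(insert l A \<subseteq> rleaves (RL l) \<union> rleaves b) = (A \<subseteq> rleaves b)" if "l \<notin> A" for A
    using that by auto
  have key2: "insert l A \<inter> rleaves (RL l) = {l}" for A by auto
  have key3: "insert l A \<inter> rleaves b = A \<inter> rleaves b" for A using lb by auto
  have lob: "lo b A = (if A \<subseteq> rleaves b then lo b (A \<inter> rleaves b) else 0)" for A
    using lo_out[of A b] by (simp add: Int_absorb2)
  have hib: "hi b A = (if A \<subseteq> rleaves b then hi b (A \<inter> rleaves b) else 0)" for A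
    using hi_out[of A b] by (simp add: Int_absorb2)
  have leaves: "rleaves b = rleaves (RN t r (RL l) b) - {l}" using lb by auto
  show ?thesis
  proof (cases t)
    case True
    have "Kp l (RN t r (RL l) b) b 0 r"
    proof (rule KpI2[OF vb leaves r01(1)])
      fix A assume A: "l \<notin> A"
      show "lo (RN t r (RL l) b) (insert l A) = 0"
        unfolding lo_RN[OF v] key1[OF A] key2 key3 using True by (simp add: lo_RL)
      show "hi (RN t r (RL l) b) (insert l A) = r * lo b A"
        unfolding hi_RN[OF v] key1[OF A] key2 key3 using True by (subst lob) (simp add: lo_RL hi_RL)
    qed
    then show ?thesis by blast
  next
    case False
    have "Kp l (RN t r (RL l) b) b (1 - r) 1"
    proof (rule KpI1[OF vb leaves])
      show "0 \<le> 1 - r" "0 \<le> (1::real)" using r01 by auto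
      fix A assume A: "l \<notin> A"
      show "lo (RN t r (RL l) b) (insert l A) = (1 - r) * lo b A"
        unfolding lo_RN[OF v] key1[OF A] key2 key3 using False by (subst lob) (simp add: lo_RL hi_RL)
      show "hi (RN t r (RL l) b) (insert l A) = 1 * hi b A"
        unfolding hi_RN[OF v] key1[OF A] key2 key3 using False by (subst hib) (simp add: lo_RL hi_RL)
    qed
    then show ?thesis by blast
  qed
qed

lemma K_main:
  "rvalid R \<Longrightarrow> l \<in> rleaves R \<Longrightarrow> R \<noteq> RL l \<Longrightarrow> \<exists>R' lam eta. Kp l R R' lam eta"
proof (induction R)
  case (RL i)
  then show ?case by simp
next
  case (RN t r a b)
  have v: "rvalid (RN t r a b)" by fact
  have va: "rvalid a" and vb: "rvalid b" using v by auto
  show ?case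
  proof (cases "l \<in> rleaves a")
    case True
    show ?thesis
    proof (cases "a = RL l")
      case True
      then show ?thesis using K_base v by simp
    next
      case False
      then obtain a' la ea where "Kp l a a' la ea" using RN.IH(1)[OF va \<open>l \<in> rleaves a\<close>] by blast
      then show ?thesis using K_step[OF v \<open>l \<in> rleaves a\<close>] by blast
    qed
  next
    case False
    then have lb: "l \<in> rleaves b" using RN.prems by simp
    note m = mirror[OF v]
    have "\<exists>R' lam eta. Kp l (RN t (1 - r) b a) R' lam eta"
    proof (cases "b = RL l")
      case True
      then show ?thesis using K_base m(1) by simp
    next
      case False
      then obtain b' lb' eb where "Kp l b b' lb' eb" using RN.IH(2)[OF vb lb] by blast
      then show ?thesis using K_step[OF m(1) lb] by blast
    qed
    then obtain R' lam eta where "Kp l (RN t (1 - r) b a) R' lam eta" by blast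
    then have "Kp l (RN t r a b) R' lam eta"
      by (rule Kp_cong[rotated 3]) (use m in auto)
    then show ?thesis by blast
  qed
qed

definition qv :: "(nat \<Rightarrow> real) \<Rightarrow> nat btree \<Rightarrow> bool" where
  "qv q T \<longleftrightarrow> (\<forall>i\<in>set (leaves T). 0 \<le> q i \<and> q i \<le> 1)"

fun shape :: "rt \<Rightarrow> nat btree" where
  "shape (RL i) = Lf i"
| "shape (RN t r a b) = Nd (shape a) (shape b)"

definition pw :: "(nat \<Rightarrow> real) \<Rightarrow> nat btree \<Rightarrow> nat set \<Rightarrow> real" where
  "pw q T A = (if Pq q T = 1 then hi (rt_of q T) A else lo (rt_of q T) A)"

lemma pw_pmf: "pmf (pivotal_sampling q T) A = pw q T A"
  unfolding pw_def pivotal_rt lo_def hi_def by simp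

lemma Pq_01: "qv q T \<Longrightarrow> 0 \<le> Pq q T \<and> Pq q T \<le> 1"
  by (induction T) (auto simp: qv_def)

lemma rleaves_rt_of: "rleaves (rt_of q T) = set (leaves T)"
  by (induction T) auto

lemma rvalid_rt_of: "qv q T \<Longrightarrow> distinct (leaves T) \<Longrightarrow> rvalid (rt_of q T)"
proof (induction T)
  case (Lf x)
  then show ?case by simp
next
  case (Nd a b)
  have qa: "qv q a" and qb: "qv q b" using Nd.prems by (auto simp: qv_def)
  have pa: "0 \<le> Pq q a" "Pq q a \<le> 1" and pb: "0 \<le> Pq q b" "Pq q b \<le> 1" using Pq_01[OF qa] Pq_01[OF qb] by auto
  have d: "rleaves (rt_of q a) \<inter> rleaves (rt_of q b) = {}" using Nd.prems by (simp add: rleaves_rt_of)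
  have va: "rvalid (rt_of q a)" and vb: "rvalid (rt_of q b)" using Nd qa qb by auto
  show ?case
  proof (cases "Pq q a + Pq q b \<le> 1")
    case True
    have "Pq q a / (Pq q a + Pq q b) \<le> 1"
      using pa pb by (cases "Pq q a + Pq q b = 0") (simp_all add: divide_le_eq_1)
    then show ?thesis using True pa pb d va vb by simp
  next
    case False
    have "(1 - Pq q a) / (2 - Pq q a - Pq q b) \<le> 1"
      using pa pb by (cases "2 - Pq q a - Pq q b = 0") (simp_all add: divide_le_eq_1)
    moreover have "0 \<le> (1 - Pq q a) / (2 - Pq q a - Pq q b)"
      using pa pb by simp
    ultimately show ?thesis using False d va vb by simp
  qed
qed

lemma rt_of_cong: "(\<forall>i\<in>set (leaves T). q i = q' i) \<Longrightarrow> Pq q T = Pq q' T \<and> rt_of q T = rt_of q' T"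
  by (induction T) auto

lemma shape_leaves: "set (leaves (shape R)) = rleaves R"
  by (induction R) auto

lemma shape_distinct: "rvalid R \<Longrightarrow> distinct (leaves (shape R))"
  by (induction R) (auto simp: shape_leaves)

lemma combine:
  assumes d: "set (leaves Ta) \<inter> set (leaves Tb) = {}" and "qv qa Ta" "qv qb Tb"
  shows "\<exists>q. qv q (Nd Ta Tb) \<and> Pq q Ta = Pq qa Ta \<and> Pq q Tb = Pq qb Tb \<and>
     rt_of q Ta = rt_of qa Ta \<and> rt_of q Tb = rt_of qb Tb"
proof -
  define q where "q = (\<lambda>i. if i \<in> set (leaves Ta) then qa i else qb i)"
  have "\<forall>i\<in>set (leaves Ta). q i = qa i" "\<forall>i\<in>set (leaves Tb). q i = qb i"
    using d unfolding q_def by auto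
  moreover have "qv q (Nd Ta Tb)" using assms(2,3) d unfolding qv_def q_def by auto
  ultimately show ?thesis using rt_of_cong[of Ta q qa] rt_of_cong[of Tb q qb] by blast
qed

lemma node_lo:
  assumes "qv q (Nd Ta Tb)" "distinct (leaves (Nd Ta Tb))"
  shows "lo (rt_of q (Nd Ta Tb)) A = (if A \<subseteq> set (leaves Ta) \<union> set (leaves Tb) then
     (if Pq q Ta + Pq q Tb \<le> 1 then lo (rt_of q Ta) (A \<inter> set (leaves Ta)) * lo (rt_of q Tb) (A \<inter> set (leaves Tb))
      else ((1 - Pq q Ta) / (2 - Pq q Ta - Pq q Tb)) * (lo (rt_of q Ta) (A \<inter> set (leaves Ta)) * hi (rt_of q Tb) (A \<inter> set (leaves Tb)))
        + (1 - (1 - Pq q Ta) / (2 - Pq q Ta - Pq q Tb)) * (hi (rt_of q Ta) (A \<inter> set (leaves Ta)) * lo (rt_of q Tb) (A \<inter> set (leaves Tb))))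
     else 0)"
proof -
  have v: "rvalid (rt_of q (Nd Ta Tb))" using rvalid_rt_of assms by blast
  show ?thesis
  proof (cases "Pq q Ta + Pq q Tb \<le> 1")
    case True
    with v show ?thesis by (simp add: lo_RN rleaves_rt_of)
  next
    case False
    with v show ?thesis by (simp add: lo_RN rleaves_rt_of)
  qed
qed

lemma node_hi:
  assumes "qv q (Nd Ta Tb)" "distinct (leaves (Nd Ta Tb))"
  shows "hi (rt_of q (Nd Ta Tb)) A = (if A \<subseteq> set (leaves Ta) \<union> set (leaves Tb) then
     (if Pq q Ta + Pq q Tb \<le> 1 then (Pq q Ta / (Pq q Ta + Pq q Tb)) * (hi (rt_of q Ta) (A \<inter> set (leaves Ta)) * lo (rt_of q Tb) (A \<inter> set (leaves Tb)))
        + (1 - Pq q Ta / (Pq q Ta + Pq q Tb)) * (lo (rt_of q Ta) (A \<inter> set (leaves Ta)) * hi (rt_of q Tb) (A \<inter> set (leaves Tb)))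
      else hi (rt_of q Ta) (A \<inter> set (leaves Ta)) * hi (rt_of q Tb) (A \<inter> set (leaves Tb)))
     else 0)"
proof -
  have v: "rvalid (rt_of q (Nd Ta Tb))" using rvalid_rt_of assms by blast
  show ?thesis
  proof (cases "Pq q Ta + Pq q Tb \<le> 1")
    case True
    with v show ?thesis by (simp add: hi_RN rleaves_rt_of)
  next
    case False
    with v show ?thesis by (simp add: hi_RN rleaves_rt_of)
  qed
qed

lemma build:
  assumes d: "set (leaves Ta) \<inter> set (leaves Tb) = {}" "distinct (leaves Ta)" "distinct (leaves Tb)"
    and qa: "qv qa Ta" and qb: "qv qb Tb"
  shows "\<exists>q. qv q (Nd Ta Tb) \<and>
    Pq q (Nd Ta Tb) = (if Pq qa Ta + Pq qb Tb \<le> 1 then Pq qa Ta + Pq qb Tb else Pq qa Ta + Pq qb Tb - 1) \<and>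
    (\<forall>A. lo (rt_of q (Nd Ta Tb)) A = (if A \<subseteq> set (leaves Ta) \<union> set (leaves Tb) then
     (if Pq qa Ta + Pq qb Tb \<le> 1 then lo (rt_of qa Ta) (A \<inter> set (leaves Ta)) * lo (rt_of qb Tb) (A \<inter> set (leaves Tb))
      else ((1 - Pq qa Ta) / (2 - Pq qa Ta - Pq qb Tb)) * (lo (rt_of qa Ta) (A \<inter> set (leaves Ta)) * hi (rt_of qb Tb) (A \<inter> set (leaves Tb)))
        + (1 - (1 - Pq qa Ta) / (2 - Pq qa Ta - Pq qb Tb)) * (hi (rt_of qa Ta) (A \<inter> set (leaves Ta)) * lo (rt_of qb Tb) (A \<inter> set (leaves Tb))))
     else 0)) \<and>
    (\<forall>A. hi (rt_of q (Nd Ta Tb)) A = (if A \<subseteq> set (leaves Ta) \<union> set (leaves Tb) then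
     (if Pq qa Ta + Pq qb Tb \<le> 1 then (Pq qa Ta / (Pq qa Ta + Pq qb Tb)) * (hi (rt_of qa Ta) (A \<inter> set (leaves Ta)) * lo (rt_of qb Tb) (A \<inter> set (leaves Tb)))
        + (1 - Pq qa Ta / (Pq qa Ta + Pq qb Tb)) * (lo (rt_of qa Ta) (A \<inter> set (leaves Ta)) * hi (rt_of qb Tb) (A \<inter> set (leaves Tb)))
      else hi (rt_of qa Ta) (A \<inter> set (leaves Ta)) * hi (rt_of qb Tb) (A \<inter> set (leaves Tb)))
     else 0))"
proof -
  obtain q where q: "qv q (Nd Ta Tb)" "Pq q Ta = Pq qa Ta" "Pq q Tb = Pq qb Tb"
     "rt_of q Ta = rt_of qa Ta" "rt_of q Tb = rt_of qb Tb"
    using combine[OF d(1) qa qb] by blast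
  have dd: "distinct (leaves (Nd Ta Tb))" using d by simp
  show ?thesis
    apply (rule exI[of _ q])
    using q node_lo[OF q(1) dd] node_hi[OF q(1) dd] by simp
qed

lemma pw01: "Pq q T = 0 \<or> Pq q T = 1 \<Longrightarrow> (\<forall>A. pw q T A = X A) \<Longrightarrow>
  (Pq q T = 0 \<and> (\<forall>A. lo (rt_of q T) A = X A)) \<or> (Pq q T = 1 \<and> (\<forall>A. hi (rt_of q T) A = X A))"
  by (auto simp: pw_def)

lemma comb01:
  assumes d: "set (leaves Ta) \<inter> set (leaves Tb) = {}" "distinct (leaves Ta)" "distinct (leaves Tb)"
    and qa: "qv qa Ta" and qb: "qv qb Tb"
    and pa: "Pq qa Ta = 0 \<or> Pq qa Ta = 1" and pb: "Pq qb Tb = 0 \<or> Pq qb Tb = 1"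
    and X: "\<forall>A. pw qa Ta A = X A" and Y: "\<forall>A. pw qb Tb A = Y A"
  shows "\<exists>q. qv q (Nd Ta Tb) \<and> (Pq q (Nd Ta Tb) = 0 \<or> Pq q (Nd Ta Tb) = 1) \<and>
    (\<forall>A. pw q (Nd Ta Tb) A = (if A \<subseteq> set (leaves Ta) \<union> set (leaves Tb) then X (A \<inter> set (leaves Ta)) * Y (A \<inter> set (leaves Tb)) else 0))"
proof -
  obtain q where q: "qv q (Nd Ta Tb)"
    "Pq q (Nd Ta Tb) = (if Pq qa Ta + Pq qb Tb \<le> 1 then Pq qa Ta + Pq qb Tb else Pq qa Ta + Pq qb Tb - 1)"
    and L: "\<And>A. lo (rt_of q (Nd Ta Tb)) A = (if A \<subseteq> set (leaves Ta) \<union> set (leaves Tb) then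
     (if Pq qa Ta + Pq qb Tb \<le> 1 then lo (rt_of qa Ta) (A \<inter> set (leaves Ta)) * lo (rt_of qb Tb) (A \<inter> set (leaves Tb))
      else ((1 - Pq qa Ta) / (2 - Pq qa Ta - Pq qb Tb)) * (lo (rt_of qa Ta) (A \<inter> set (leaves Ta)) * hi (rt_of qb Tb) (A \<inter> set (leaves Tb)))
        + (1 - (1 - Pq qa Ta) / (2 - Pq qa Ta - Pq qb Tb)) * (hi (rt_of qa Ta) (A \<inter> set (leaves Ta)) * lo (rt_of qb Tb) (A \<inter> set (leaves Tb))))
     else 0)"
    and H: "\<And>A. hi (rt_of q (Nd Ta Tb)) A = (if A \<subseteq> set (leaves Ta) \<union> set (leaves Tb) then
     (if Pq qa Ta + Pq qb Tb \<le> 1 then (Pq qa Ta / (Pq qa Ta + Pq qb Tb)) * (hi (rt_of qa Ta) (A \<inter> set (leaves Ta)) * lo (rt_of qb Tb) (A \<inter> set (leaves Tb)))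
        + (1 - Pq qa Ta / (Pq qa Ta + Pq qb Tb)) * (lo (rt_of qa Ta) (A \<inter> set (leaves Ta)) * hi (rt_of qb Tb) (A \<inter> set (leaves Tb)))
      else hi (rt_of qa Ta) (A \<inter> set (leaves Ta)) * hi (rt_of qb Tb) (A \<inter> set (leaves Tb)))
     else 0)"
    using build[OF d qa qb] by blast
  have "Pq q (Nd Ta Tb) = 0 \<or> Pq q (Nd Ta Tb) = 1" using q(2) pa pb by auto
  moreover have "pw q (Nd Ta Tb) A = (if A \<subseteq> set (leaves Ta) \<union> set (leaves Tb) then X (A \<inter> set (leaves Ta)) * Y (A \<inter> set (leaves Tb)) else 0)" for A
    using pw01[OF pa X] pw01[OF pb Y] q(2)
    unfolding pw_def L H by auto
  ultimately show ?thesis using q(1) by blast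
qed

definition RealT :: "rt \<Rightarrow> bool" where
  "RealT R \<longleftrightarrow> (\<forall>t. 0 < t \<and> t < 1 \<longrightarrow> (\<exists>q. qv q (shape R) \<and> Pq q (shape R) = t \<and>
      (\<forall>A. lo (rt_of q (shape R)) A = lo R A) \<and> (\<forall>A. hi (rt_of q (shape R)) A = hi R A)))"

definition Real01 :: "rt \<Rightarrow> (nat set \<Rightarrow> real) \<Rightarrow> bool" where
  "Real01 R X \<longleftrightarrow> (\<exists>q. qv q (shape R) \<and> (Pq q (shape R) = 0 \<or> Pq q (shape R) = 1) \<and> (\<forall>A. pw q (shape R) A = X A))"

lemma real_leaf: "RealT (RL i) \<and> Real01 (RL i) (lo (RL i)) \<and> Real01 (RL i) (hi (RL i))"
proof (intro conjI)
  show "RealT (RL i)" unfolding RealT_def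
  proof (intro allI impI)
    fix t :: real assume t: "0 < t \<and> t < 1"
    show "\<exists>q. qv q (shape (RL i)) \<and> Pq q (shape (RL i)) = t \<and> (\<forall>A. lo (rt_of q (shape (RL i))) A = lo (RL i) A) \<and>
          (\<forall>A. hi (rt_of q (shape (RL i))) A = hi (RL i) A)"
      by (rule exI[of _ "\<lambda>_. t"]) (use t in \<open>simp add: qv_def\<close>)
  qed
  show "Real01 (RL i) (lo (RL i))" unfolding Real01_def
    by (rule exI[of _ "\<lambda>_. 0"]) (simp add: qv_def pw_def)
  show "Real01 (RL i) (hi (RL i))" unfolding Real01_def
    by (rule exI[of _ "\<lambda>_. 1"]) (simp add: qv_def pw_def)
qed

definition NL :: "real \<Rightarrow> real \<Rightarrow> (nat set \<Rightarrow> real) \<Rightarrow> (nat set \<Rightarrow> real) \<Rightarrow> (nat set \<Rightarrow> real) \<Rightarrow> (nat set \<Rightarrow> real) \<Rightarrow> nat set \<Rightarrow> nat set \<Rightarrow> nat set \<Rightarrow> real" where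
  "NL pa pb la ha lb hb La Lb A = (if A \<subseteq> La \<union> Lb then
     (if pa + pb \<le> 1 then la (A \<inter> La) * lb (A \<inter> Lb)
      else ((1 - pa) / (2 - pa - pb)) * (la (A \<inter> La) * hb (A \<inter> Lb)) + (1 - (1 - pa) / (2 - pa - pb)) * (ha (A \<inter> La) * lb (A \<inter> Lb)))
     else 0)"

definition NH :: "real \<Rightarrow> real \<Rightarrow> (nat set \<Rightarrow> real) \<Rightarrow> (nat set \<Rightarrow> real) \<Rightarrow> (nat set \<Rightarrow> real) \<Rightarrow> (nat set \<Rightarrow> real) \<Rightarrow> nat set \<Rightarrow> nat set \<Rightarrow> nat set \<Rightarrow> real" where
  "NH pa pb la ha lb hb La Lb A = (if A \<subseteq> La \<union> Lb then
     (if pa + pb \<le> 1 then (pa / (pa + pb)) * (ha (A \<inter> La) * lb (A \<inter> Lb)) + (1 - pa / (pa + pb)) * (la (A \<inter> La) * hb (A \<inter> Lb))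
      else ha (A \<inter> La) * hb (A \<inter> Lb))
     else 0)"

lemma buildE:
  assumes d: "set (leaves Ta) \<inter> set (leaves Tb) = {}" "distinct (leaves Ta)" "distinct (leaves Tb)"
    and qa: "qv qa Ta" and qb: "qv qb Tb"
  obtains q where "qv q (Nd Ta Tb)"
    "Pq q (Nd Ta Tb) = (if Pq qa Ta + Pq qb Tb \<le> 1 then Pq qa Ta + Pq qb Tb else Pq qa Ta + Pq qb Tb - 1)"
    "lo (rt_of q (Nd Ta Tb)) = NL (Pq qa Ta) (Pq qb Tb) (lo (rt_of qa Ta)) (hi (rt_of qa Ta)) (lo (rt_of qb Tb)) (hi (rt_of qb Tb)) (set (leaves Ta)) (set (leaves Tb))"
    "hi (rt_of q (Nd Ta Tb)) = NH (Pq qa Ta) (Pq qb Tb) (lo (rt_of qa Ta)) (hi (rt_of qa Ta)) (lo (rt_of qb Tb)) (hi (rt_of qb Tb)) (set (leaves Ta)) (set (leaves Tb))"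
proof -
  from build[OF assms] obtain q where "qv q (Nd Ta Tb)"
    "Pq q (Nd Ta Tb) = (if Pq qa Ta + Pq qb Tb \<le> 1 then Pq qa Ta + Pq qb Tb else Pq qa Ta + Pq qb Tb - 1)"
    "\<forall>A. lo (rt_of q (Nd Ta Tb)) A = NL (Pq qa Ta) (Pq qb Tb) (lo (rt_of qa Ta)) (hi (rt_of qa Ta)) (lo (rt_of qb Tb)) (hi (rt_of qb Tb)) (set (leaves Ta)) (set (leaves Tb)) A"
    "\<forall>A. hi (rt_of q (Nd Ta Tb)) A = NH (Pq qa Ta) (Pq qb Tb) (lo (rt_of qa Ta)) (hi (rt_of qa Ta)) (lo (rt_of qb Tb)) (hi (rt_of qb Tb)) (set (leaves Ta)) (set (leaves Tb)) A"
    unfolding NL_def NH_def by blast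
  then show ?thesis using that by (metis ext)
qed

lemma getT: "RealT a \<Longrightarrow> 0 < x \<Longrightarrow> x < 1 \<Longrightarrow> \<exists>qa. qv qa (shape a) \<and> Pq qa (shape a) = x \<and>
   (\<forall>A. lo (rt_of qa (shape a)) A = lo a A) \<and> (\<forall>A. hi (rt_of qa (shape a)) A = hi a A)"
  unfolding RealT_def by blast

lemma get01: "Real01 a X \<Longrightarrow> \<exists>qa. qv qa (shape a) \<and>
   ((Pq qa (shape a) = 0 \<and> (\<forall>A. lo (rt_of qa (shape a)) A = X A)) \<or> (Pq qa (shape a) = 1 \<and> (\<forall>A. hi (rt_of qa (shape a)) A = X A)))"
  unfolding Real01_def using pw01 by blast

lemma get01': "Real01 a X \<Longrightarrow> \<exists>qa. qv qa (shape a) \<and> (Pq qa (shape a) = 0 \<or> Pq qa (shape a) = 1) \<and> (\<forall>A. pw qa (shape a) A = X A)"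
  unfolding Real01_def by blast

lemma NL_le: "pa + pb \<le> 1 \<Longrightarrow> NL pa pb la ha lb hb La Lb A = (if A \<subseteq> La \<union> Lb then la (A \<inter> La) * lb (A \<inter> Lb) else 0)"
  unfolding NL_def by simp

lemma NL_gt: "\<not> pa + pb \<le> 1 \<Longrightarrow> (1 - pa) / (2 - pa - pb) = w \<Longrightarrow>
  NL pa pb la ha lb hb La Lb A = (if A \<subseteq> La \<union> Lb then w * (la (A \<inter> La) * hb (A \<inter> Lb)) + (1 - w) * (ha (A \<inter> La) * lb (A \<inter> Lb)) else 0)"
  unfolding NL_def by simp

lemma NH_le: "pa + pb \<le> 1 \<Longrightarrow> pa / (pa + pb) = w \<Longrightarrow>
  NH pa pb la ha lb hb La Lb A = (if A \<subseteq> La \<union> Lb then w * (ha (A \<inter> La) * lb (A \<inter> Lb)) + (1 - w) * (la (A \<inter> La) * hb (A \<inter> Lb)) else 0)"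
  unfolding NH_def by simp

lemma NH_gt: "\<not> pa + pb \<le> 1 \<Longrightarrow>
  NH pa pb la ha lb hb La Lb A = (if A \<subseteq> La \<union> Lb then ha (A \<inter> La) * hb (A \<inter> Lb) else 0)"
  unfolding NH_def by simp

lemma getTf: assumes "RealT a" "0 < x" "x < 1"
  shows "\<exists>qa. qv qa (shape a) \<and> Pq qa (shape a) = x \<and> lo (rt_of qa (shape a)) = lo a \<and> hi (rt_of qa (shape a)) = hi a"
proof -
  obtain qa where "qv qa (shape a)" "Pq qa (shape a) = x" "\<forall>A. lo (rt_of qa (shape a)) A = lo a A" "\<forall>A. hi (rt_of qa (shape a)) A = hi a A"
    using getT[OF assms] by blast
  then show ?thesis by (intro exI[of _ qa]) auto
qed

lemma get01f: assumes "Real01 a X"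
  shows "\<exists>qa. qv qa (shape a) \<and> ((Pq qa (shape a) = 0 \<and> lo (rt_of qa (shape a)) = X) \<or> (Pq qa (shape a) = 1 \<and> hi (rt_of qa (shape a)) = X))"
proof -
  obtain qa where "qv qa (shape a)" "(Pq qa (shape a) = 0 \<and> (\<forall>A. lo (rt_of qa (shape a)) A = X A)) \<or> (Pq qa (shape a) = 1 \<and> (\<forall>A. hi (rt_of qa (shape a)) A = X A))"
    using get01[OF assms] by blast
  then show ?thesis by (intro exI[of _ qa]) auto
qed


lemma comb01R:
  assumes d: "set (leaves Ta) \<inter> set (leaves Tb) = {}" "distinct (leaves Ta)" "distinct (leaves Tb)"
    and qa: "qv qa Ta" and qb: "qv qb Tb"
    and pa: "Pq qa Ta = 0 \<or> Pq qa Ta = 1" and pb: "Pq qb Tb = 0 \<or> Pq qb Tb = 1"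
    and X: "\<forall>A. pw qa Ta A = X A" and Y: "\<forall>A. pw qb Tb A = Y A"
    and Z: "\<forall>A. (if A \<subseteq> set (leaves Ta) \<union> set (leaves Tb) then X (A \<inter> set (leaves Ta)) * Y (A \<inter> set (leaves Tb)) else 0) = Z A"
  shows "\<exists>q. qv q (Nd Ta Tb) \<and> (Pq q (Nd Ta Tb) = 0 \<or> Pq q (Nd Ta Tb) = 1) \<and> (\<forall>A. pw q (Nd Ta Tb) A = Z A)"
proof -
  obtain q where "qv q (Nd Ta Tb)" "Pq q (Nd Ta Tb) = 0 \<or> Pq q (Nd Ta Tb) = 1"
    "\<forall>A. pw q (Nd Ta Tb) A = (if A \<subseteq> set (leaves Ta) \<union> set (leaves Tb) then X (A \<inter> set (leaves Ta)) * Y (A \<inter> set (leaves Tb)) else 0)"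
    using comb01[OF d qa qb pa pb X Y] by blast
  then show ?thesis using Z by metis
qed

lemma real_node_T:
  assumes v: "rvalid (RN True r a b)"
    and Ra: "RealT a" "Real01 a (lo a)" "Real01 a (hi a)"
    and Rb: "RealT b" "Real01 b (lo b)" "Real01 b (hi b)"
  shows "RealT (RN True r a b) \<and> Real01 (RN True r a b) (lo (RN True r a b)) \<and> Real01 (RN True r a b) (hi (RN True r a b))"
proof -
  let ?Ta = "shape a" and ?Tb = "shape b"
  have r01: "0 \<le> r" "r \<le> 1" using v by auto
  have LA: "set (leaves ?Ta) = rleaves a" and LB: "set (leaves ?Tb) = rleaves b" by (simp_all add: shape_leaves)
  have d: "set (leaves ?Ta) \<inter> set (leaves ?Tb) = {}" "distinct (leaves ?Ta)" "distinct (leaves ?Tb)"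
    using v by (auto simp: shape_leaves shape_distinct)
  have sh: "shape (RN True r a b) = Nd ?Ta ?Tb" by simp
  note loR = lo_RN[OF v] and hiR = hi_RN[OF v]
  have c0: "Real01 (RN True r a b) (lo (RN True r a b))"
  proof -
    obtain qa where qa: "qv qa ?Ta" "Pq qa ?Ta = 0 \<or> Pq qa ?Ta = 1" "\<forall>A. pw qa ?Ta A = lo a A" using get01'[OF Ra(2)] by blast
    obtain qb where qb: "qv qb ?Tb" "Pq qb ?Tb = 0 \<or> Pq qb ?Tb = 1" "\<forall>A. pw qb ?Tb A = lo b A" using get01'[OF Rb(2)] by blast
    show ?thesis unfolding Real01_def sh
      by (rule comb01R[OF d qa(1) qb(1) qa(2) qb(2) qa(3) qb(3)]) (unfold loR LA LB, simp)
  qed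
  have c1: "Real01 (RN True r a b) (hi (RN True r a b))"
  proof (cases "0 < r \<and> r < 1")
    case True
    obtain qa where qa: "qv qa ?Ta" "Pq qa ?Ta = r" "lo (rt_of qa ?Ta) = lo a" "hi (rt_of qa ?Ta) = hi a"
      using getTf[OF Ra(1), of r] True by blast
    obtain qb where qb: "qv qb ?Tb" "Pq qb ?Tb = 1 - r" "lo (rt_of qb ?Tb) = lo b" "hi (rt_of qb ?Tb) = hi b"
      using getTf[OF Rb(1), of "1 - r"] True by auto
    obtain q where q: "qv q (Nd ?Ta ?Tb)"
      "Pq q (Nd ?Ta ?Tb) = (if Pq qa ?Ta + Pq qb ?Tb \<le> 1 then Pq qa ?Ta + Pq qb ?Tb else Pq qa ?Ta + Pq qb ?Tb - 1)"
      "lo (rt_of q (Nd ?Ta ?Tb)) = NL (Pq qa ?Ta) (Pq qb ?Tb) (lo (rt_of qa ?Ta)) (hi (rt_of qa ?Ta)) (lo (rt_of qb ?Tb)) (hi (rt_of qb ?Tb)) (set (leaves ?Ta)) (set (leaves ?Tb))"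
      "hi (rt_of q (Nd ?Ta ?Tb)) = NH (Pq qa ?Ta) (Pq qb ?Tb) (lo (rt_of qa ?Ta)) (hi (rt_of qa ?Ta)) (lo (rt_of qb ?Tb)) (hi (rt_of qb ?Tb)) (set (leaves ?Ta)) (set (leaves ?Tb))"
      by (rule buildE[OF d qa(1) qb(1)])
    have s1: "Pq qa ?Ta + Pq qb ?Tb \<le> 1" using qa(2) qb(2) by simp
    have s2: "Pq qa ?Ta / (Pq qa ?Ta + Pq qb ?Tb) = r" using qa(2) qb(2) by simp
    have P1: "Pq q (Nd ?Ta ?Tb) = 1" using q(2) qa(2) qb(2) by simp
    have "pw q (Nd ?Ta ?Tb) A = hi (RN True r a b) A" for A
      unfolding pw_def P1 q(4) by (unfold NH_le[OF s1 s2], unfold qa(3,4) qb(3,4) LA LB hiR) simp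
    then show ?thesis unfolding Real01_def sh using q(1) P1 by blast
  next
    case False
    then have r0: "r = 0 \<or> r = 1" using r01 by auto
    show ?thesis
    proof (cases "r = 1")
      case True
      obtain qa where qa: "qv qa ?Ta" "Pq qa ?Ta = 0 \<or> Pq qa ?Ta = 1" "\<forall>A. pw qa ?Ta A = hi a A" using get01'[OF Ra(3)] by blast
      obtain qb where qb: "qv qb ?Tb" "Pq qb ?Tb = 0 \<or> Pq qb ?Tb = 1" "\<forall>A. pw qb ?Tb A = lo b A" using get01'[OF Rb(2)] by blast
      show ?thesis unfolding Real01_def sh
        by (rule comb01R[OF d qa(1) qb(1) qa(2) qb(2) qa(3) qb(3)]) (unfold hiR LA LB, simp add: True)
    next
      case False
      then have "r = 0" using r0 by simp
      obtain qa where qa: "qv qa ?Ta" "Pq qa ?Ta = 0 \<or> Pq qa ?Ta = 1" "\<forall>A. pw qa ?Ta A = lo a A" using get01'[OF Ra(2)] by blast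
      obtain qb where qb: "qv qb ?Tb" "Pq qb ?Tb = 0 \<or> Pq qb ?Tb = 1" "\<forall>A. pw qb ?Tb A = hi b A" using get01'[OF Rb(3)] by blast
      show ?thesis unfolding Real01_def sh
        by (rule comb01R[OF d qa(1) qb(1) qa(2) qb(2) qa(3) qb(3)]) (unfold hiR LA LB, simp add: \<open>r = 0\<close>)
    qed
  qed
  have cT: "RealT (RN True r a b)"
    unfolding RealT_def sh
  proof (intro allI impI)
    fix \<tau> :: real assume tau: "0 < \<tau> \<and> \<tau> < 1"
    show "\<exists>q. qv q (Nd ?Ta ?Tb) \<and> Pq q (Nd ?Ta ?Tb) = \<tau> \<and> (\<forall>A. lo (rt_of q (Nd ?Ta ?Tb)) A = lo (RN True r a b) A) \<and>
          (\<forall>A. hi (rt_of q (Nd ?Ta ?Tb)) A = hi (RN True r a b) A)"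
    proof (cases "0 < r \<and> r < 1")
      case True
      have x1: "0 < \<tau> * r" "\<tau> * r < 1" using tau True by (auto intro: mult_pos_pos mult_less_le_imp_less[of \<tau> 1 r 1, simplified])
      have x2: "0 < \<tau> * (1 - r)" "\<tau> * (1 - r) < 1" using tau True by (auto intro: mult_pos_pos mult_less_le_imp_less[of \<tau> 1 "1 - r" 1, simplified])
      obtain qa where qa: "qv qa ?Ta" "Pq qa ?Ta = \<tau> * r" "lo (rt_of qa ?Ta) = lo a" "hi (rt_of qa ?Ta) = hi a"
        using getTf[OF Ra(1) x1] by blast
      obtain qb where qb: "qv qb ?Tb" "Pq qb ?Tb = \<tau> * (1 - r)" "lo (rt_of qb ?Tb) = lo b" "hi (rt_of qb ?Tb) = hi b"
        using getTf[OF Rb(1) x2] by blast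
      obtain q where q: "qv q (Nd ?Ta ?Tb)"
        "Pq q (Nd ?Ta ?Tb) = (if Pq qa ?Ta + Pq qb ?Tb \<le> 1 then Pq qa ?Ta + Pq qb ?Tb else Pq qa ?Ta + Pq qb ?Tb - 1)"
        "lo (rt_of q (Nd ?Ta ?Tb)) = NL (Pq qa ?Ta) (Pq qb ?Tb) (lo (rt_of qa ?Ta)) (hi (rt_of qa ?Ta)) (lo (rt_of qb ?Tb)) (hi (rt_of qb ?Tb)) (set (leaves ?Ta)) (set (leaves ?Tb))"
        "hi (rt_of q (Nd ?Ta ?Tb)) = NH (Pq qa ?Ta) (Pq qb ?Tb) (lo (rt_of qa ?Ta)) (hi (rt_of qa ?Ta)) (lo (rt_of qb ?Tb)) (hi (rt_of qb ?Tb)) (set (leaves ?Ta)) (set (leaves ?Tb))"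
        by (rule buildE[OF d qa(1) qb(1)])
      have sum: "Pq qa ?Ta + Pq qb ?Tb = \<tau>" using qa(2) qb(2) by (simp add: algebra_simps)
      have s1: "Pq qa ?Ta + Pq qb ?Tb \<le> 1" using sum tau by simp
      have s2: "Pq qa ?Ta / (Pq qa ?Ta + Pq qb ?Tb) = r" using sum qa(2) tau by simp
      have P: "Pq q (Nd ?Ta ?Tb) = \<tau>" using q(2) s1 sum by simp
      show ?thesis
        apply (rule exI[of _ q])
        apply (unfold q(3,4))
        apply (unfold NL_le[OF s1] NH_le[OF s1 s2] )
        apply (unfold qa(3,4) qb(3,4) LA LB loR hiR)
        apply (insert q(1) P)
        apply simp
        done
    next
      case False
      then have r0: "r = 0 \<or> r = 1" using r01 by auto
      show ?thesis
      proof (cases "r = 1")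
        case True
        obtain qa where qa: "qv qa ?Ta" "Pq qa ?Ta = \<tau>" "lo (rt_of qa ?Ta) = lo a" "hi (rt_of qa ?Ta) = hi a"
          using getTf[OF Ra(1)] tau by blast
        obtain qb where qb: "qv qb ?Tb" "(Pq qb ?Tb = 0 \<and> lo (rt_of qb ?Tb) = lo b) \<or> (Pq qb ?Tb = 1 \<and> hi (rt_of qb ?Tb) = lo b)"
          using get01f[OF Rb(2)] by blast
        obtain q where q: "qv q (Nd ?Ta ?Tb)"
          "Pq q (Nd ?Ta ?Tb) = (if Pq qa ?Ta + Pq qb ?Tb \<le> 1 then Pq qa ?Ta + Pq qb ?Tb else Pq qa ?Ta + Pq qb ?Tb - 1)"
          "lo (rt_of q (Nd ?Ta ?Tb)) = NL (Pq qa ?Ta) (Pq qb ?Tb) (lo (rt_of qa ?Ta)) (hi (rt_of qa ?Ta)) (lo (rt_of qb ?Tb)) (hi (rt_of qb ?Tb)) (set (leaves ?Ta)) (set (leaves ?Tb))"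
          "hi (rt_of q (Nd ?Ta ?Tb)) = NH (Pq qa ?Ta) (Pq qb ?Tb) (lo (rt_of qa ?Ta)) (hi (rt_of qa ?Ta)) (lo (rt_of qb ?Tb)) (hi (rt_of qb ?Tb)) (set (leaves ?Ta)) (set (leaves ?Tb))"
          by (rule buildE[OF d qa(1) qb(1)])
        from qb(2) show ?thesis
        proof
          assume b: "Pq qb ?Tb = 0 \<and> lo (rt_of qb ?Tb) = lo b"
          have s1: "Pq qa ?Ta + Pq qb ?Tb \<le> 1" using qa(2) b tau by simp
          have s2: "Pq qa ?Ta / (Pq qa ?Ta + Pq qb ?Tb) = 1" using qa(2) b tau by simp
          have P: "Pq q (Nd ?Ta ?Tb) = \<tau>" using q(2) s1 qa(2) b by simp
          show ?thesis
            apply (rule exI[of _ q])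
            apply (unfold q(3,4))
            apply (unfold NL_le[OF s1] NH_le[OF s1 s2] )
            apply (unfold qa(3,4) b[THEN conjunct2] LA LB loR hiR)
            apply (insert q(1) P True)
            apply simp
            done
        next
          assume b: "Pq qb ?Tb = 1 \<and> hi (rt_of qb ?Tb) = lo b"
          have s1: "\<not> Pq qa ?Ta + Pq qb ?Tb \<le> 1" using qa(2) b tau by simp
          have s2: "(1 - Pq qa ?Ta) / (2 - Pq qa ?Ta - Pq qb ?Tb) = 1" using qa(2) b tau by simp
          have P: "Pq q (Nd ?Ta ?Tb) = \<tau>" using q(2) s1 qa(2) b by simp
          show ?thesis
            apply (rule exI[of _ q])
            apply (unfold q(3,4))
            apply (unfold NL_gt[OF s1 s2] NH_gt[OF s1] )
            apply (unfold qa(3,4) b[THEN conjunct2] LA LB loR hiR)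
            apply (insert q(1) P True)
            apply simp
            done
        qed
      next
        case False
        then have "r = 0" using r0 by simp
        obtain qa where qa: "qv qa ?Ta" "(Pq qa ?Ta = 0 \<and> lo (rt_of qa ?Ta) = lo a) \<or> (Pq qa ?Ta = 1 \<and> hi (rt_of qa ?Ta) = lo a)"
          using get01f[OF Ra(2)] by blast
        obtain qb where qb: "qv qb ?Tb" "Pq qb ?Tb = \<tau>" "lo (rt_of qb ?Tb) = lo b" "hi (rt_of qb ?Tb) = hi b"
          using getTf[OF Rb(1)] tau by blast
        obtain q where q: "qv q (Nd ?Ta ?Tb)"
          "Pq q (Nd ?Ta ?Tb) = (if Pq qa ?Ta + Pq qb ?Tb \<le> 1 then Pq qa ?Ta + Pq qb ?Tb else Pq qa ?Ta + Pq qb ?Tb - 1)"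
          "lo (rt_of q (Nd ?Ta ?Tb)) = NL (Pq qa ?Ta) (Pq qb ?Tb) (lo (rt_of qa ?Ta)) (hi (rt_of qa ?Ta)) (lo (rt_of qb ?Tb)) (hi (rt_of qb ?Tb)) (set (leaves ?Ta)) (set (leaves ?Tb))"
          "hi (rt_of q (Nd ?Ta ?Tb)) = NH (Pq qa ?Ta) (Pq qb ?Tb) (lo (rt_of qa ?Ta)) (hi (rt_of qa ?Ta)) (lo (rt_of qb ?Tb)) (hi (rt_of qb ?Tb)) (set (leaves ?Ta)) (set (leaves ?Tb))"
          by (rule buildE[OF d qa(1) qb(1)])
        from qa(2) show ?thesis
        proof
          assume a: "Pq qa ?Ta = 0 \<and> lo (rt_of qa ?Ta) = lo a"
          have s1: "Pq qa ?Ta + Pq qb ?Tb \<le> 1" using qb(2) a tau by simp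
          have s2: "Pq qa ?Ta / (Pq qa ?Ta + Pq qb ?Tb) = 0" using qb(2) a tau by simp
          have P: "Pq q (Nd ?Ta ?Tb) = \<tau>" using q(2) s1 qb(2) a by simp
          show ?thesis
            apply (rule exI[of _ q])
            apply (unfold q(3,4))
            apply (unfold NL_le[OF s1] NH_le[OF s1 s2] )
            apply (unfold qb(3,4) a[THEN conjunct2] LA LB loR hiR)
            apply (insert q(1) P \<open>r = 0\<close>)
            apply simp
            done
        next
          assume a: "Pq qa ?Ta = 1 \<and> hi (rt_of qa ?Ta) = lo a"
          have s1: "\<not> Pq qa ?Ta + Pq qb ?Tb \<le> 1" using qb(2) a tau by simp
          have s2: "(1 - Pq qa ?Ta) / (2 - Pq qa ?Ta - Pq qb ?Tb) = 0" using qb(2) a tau by simp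
          have P: "Pq q (Nd ?Ta ?Tb) = \<tau>" using q(2) s1 qb(2) a by simp
          show ?thesis
            apply (rule exI[of _ q])
            apply (unfold q(3,4))
            apply (unfold NL_gt[OF s1 s2] NH_gt[OF s1] )
            apply (unfold qb(3,4) a[THEN conjunct2] LA LB loR hiR)
            apply (insert q(1) P \<open>r = 0\<close>)
            apply simp
            done
        qed
      qed
    qed
  qed
  show ?thesis using c0 c1 cT by blast
qed

lemma real_node_F:
  assumes v: "rvalid (RN False r a b)"
    and Ra: "RealT a" "Real01 a (lo a)" "Real01 a (hi a)"
    and Rb: "RealT b" "Real01 b (lo b)" "Real01 b (hi b)"
  shows "RealT (RN False r a b) \<and> Real01 (RN False r a b) (lo (RN False r a b)) \<and> Real01 (RN False r a b) (hi (RN False r a b))"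
proof -
  let ?Ta = "shape a" and ?Tb = "shape b"
  have r01: "0 \<le> r" "r \<le> 1" using v by auto
  have LA: "set (leaves ?Ta) = rleaves a" and LB: "set (leaves ?Tb) = rleaves b" by (simp_all add: shape_leaves)
  have d: "set (leaves ?Ta) \<inter> set (leaves ?Tb) = {}" "distinct (leaves ?Ta)" "distinct (leaves ?Tb)"
    using v by (auto simp: shape_leaves shape_distinct)
  have sh: "shape (RN False r a b) = Nd ?Ta ?Tb" by simp
  note loR = lo_RN[OF v] and hiR = hi_RN[OF v]
  have c1: "Real01 (RN False r a b) (hi (RN False r a b))"
  proof -
    obtain qa where qa: "qv qa ?Ta" "Pq qa ?Ta = 0 \<or> Pq qa ?Ta = 1" "\<forall>A. pw qa ?Ta A = hi a A" using get01'[OF Ra(3)] by blast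
    obtain qb where qb: "qv qb ?Tb" "Pq qb ?Tb = 0 \<or> Pq qb ?Tb = 1" "\<forall>A. pw qb ?Tb A = hi b A" using get01'[OF Rb(3)] by blast
    show ?thesis unfolding Real01_def sh
      by (rule comb01R[OF d qa(1) qb(1) qa(2) qb(2) qa(3) qb(3)]) (unfold hiR LA LB, simp)
  qed
  have c0: "Real01 (RN False r a b) (lo (RN False r a b))"
  proof (cases "0 < r \<and> r < 1")
    case True
    obtain qa where qa: "qv qa ?Ta" "Pq qa ?Ta = 1 - r" "lo (rt_of qa ?Ta) = lo a" "hi (rt_of qa ?Ta) = hi a"
      using getTf[OF Ra(1), of "1 - r"] True by auto
    obtain qb where qb: "qv qb ?Tb" "Pq qb ?Tb = r" "lo (rt_of qb ?Tb) = lo b" "hi (rt_of qb ?Tb) = hi b"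
      using getTf[OF Rb(1), of r] True by blast
    obtain q where q: "qv q (Nd ?Ta ?Tb)"
      "Pq q (Nd ?Ta ?Tb) = (if Pq qa ?Ta + Pq qb ?Tb \<le> 1 then Pq qa ?Ta + Pq qb ?Tb else Pq qa ?Ta + Pq qb ?Tb - 1)"
      "lo (rt_of q (Nd ?Ta ?Tb)) = NL (Pq qa ?Ta) (Pq qb ?Tb) (lo (rt_of qa ?Ta)) (hi (rt_of qa ?Ta)) (lo (rt_of qb ?Tb)) (hi (rt_of qb ?Tb)) (set (leaves ?Ta)) (set (leaves ?Tb))"
      "hi (rt_of q (Nd ?Ta ?Tb)) = NH (Pq qa ?Ta) (Pq qb ?Tb) (lo (rt_of qa ?Ta)) (hi (rt_of qa ?Ta)) (lo (rt_of qb ?Tb)) (hi (rt_of qb ?Tb)) (set (leaves ?Ta)) (set (leaves ?Tb))"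
      by (rule buildE[OF d qa(1) qb(1)])
    have s1: "Pq qa ?Ta + Pq qb ?Tb \<le> 1" using qa(2) qb(2) by simp
    have s2: "Pq qa ?Ta / (Pq qa ?Ta + Pq qb ?Tb) = 1 - r" using qa(2) qb(2) by simp
    have P1: "Pq q (Nd ?Ta ?Tb) = 1" using q(2) qa(2) qb(2) by simp
    have "pw q (Nd ?Ta ?Tb) A = lo (RN False r a b) A" for A
      unfolding pw_def P1 q(4) by (unfold NH_le[OF s1 s2], unfold qa(3,4) qb(3,4) LA LB loR) (simp add: algebra_simps)
    then show ?thesis unfolding Real01_def sh using q(1) P1 by blast
  next
    case False
    then have r0: "r = 0 \<or> r = 1" using r01 by auto
    show ?thesis
    proof (cases "r = 1")
      case True
      obtain qa where qa: "qv qa ?Ta" "Pq qa ?Ta = 0 \<or> Pq qa ?Ta = 1" "\<forall>A. pw qa ?Ta A = lo a A" using get01'[OF Ra(2)] by blast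
      obtain qb where qb: "qv qb ?Tb" "Pq qb ?Tb = 0 \<or> Pq qb ?Tb = 1" "\<forall>A. pw qb ?Tb A = hi b A" using get01'[OF Rb(3)] by blast
      show ?thesis unfolding Real01_def sh
        by (rule comb01R[OF d qa(1) qb(1) qa(2) qb(2) qa(3) qb(3)]) (unfold loR LA LB, simp add: True)
    next
      case False
      then have "r = 0" using r0 by simp
      obtain qa where qa: "qv qa ?Ta" "Pq qa ?Ta = 0 \<or> Pq qa ?Ta = 1" "\<forall>A. pw qa ?Ta A = hi a A" using get01'[OF Ra(3)] by blast
      obtain qb where qb: "qv qb ?Tb" "Pq qb ?Tb = 0 \<or> Pq qb ?Tb = 1" "\<forall>A. pw qb ?Tb A = lo b A" using get01'[OF Rb(2)] by blast
      show ?thesis unfolding Real01_def sh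
        by (rule comb01R[OF d qa(1) qb(1) qa(2) qb(2) qa(3) qb(3)]) (unfold loR LA LB, simp add: \<open>r = 0\<close>)
    qed
  qed
  have cT: "RealT (RN False r a b)"
    unfolding RealT_def sh
  proof (intro allI impI)
    fix \<tau> :: real assume tau: "0 < \<tau> \<and> \<tau> < 1"
    show "\<exists>q. qv q (Nd ?Ta ?Tb) \<and> Pq q (Nd ?Ta ?Tb) = \<tau> \<and> (\<forall>A. lo (rt_of q (Nd ?Ta ?Tb)) A = lo (RN False r a b) A) \<and>
          (\<forall>A. hi (rt_of q (Nd ?Ta ?Tb)) A = hi (RN False r a b) A)"
    proof (cases "0 < r \<and> r < 1")
      case True
      have m1: "0 < (1 - \<tau>) * r" "(1 - \<tau>) * r < 1" using tau True by (auto intro: mult_pos_pos mult_less_le_imp_less[of "1 - \<tau>" 1 r 1, simplified])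
      have m2: "0 < (1 - \<tau>) * (1 - r)" "(1 - \<tau>) * (1 - r) < 1" using tau True by (auto intro: mult_pos_pos mult_less_le_imp_less[of "1 - \<tau>" 1 "1 - r" 1, simplified])
      have x1: "0 < 1 - (1 - \<tau>) * r" "1 - (1 - \<tau>) * r < 1" using m1 by auto
      have x2: "0 < 1 - (1 - \<tau>) * (1 - r)" "1 - (1 - \<tau>) * (1 - r) < 1" using m2 by auto
      obtain qa where qa: "qv qa ?Ta" "Pq qa ?Ta = 1 - (1 - \<tau>) * r" "lo (rt_of qa ?Ta) = lo a" "hi (rt_of qa ?Ta) = hi a"
        using getTf[OF Ra(1) x1] by blast
      obtain qb where qb: "qv qb ?Tb" "Pq qb ?Tb = 1 - (1 - \<tau>) * (1 - r)" "lo (rt_of qb ?Tb) = lo b" "hi (rt_of qb ?Tb) = hi b"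
        using getTf[OF Rb(1) x2] by blast
      obtain q where q: "qv q (Nd ?Ta ?Tb)"
          "Pq q (Nd ?Ta ?Tb) = (if Pq qa ?Ta + Pq qb ?Tb \<le> 1 then Pq qa ?Ta + Pq qb ?Tb else Pq qa ?Ta + Pq qb ?Tb - 1)"
          "lo (rt_of q (Nd ?Ta ?Tb)) = NL (Pq qa ?Ta) (Pq qb ?Tb) (lo (rt_of qa ?Ta)) (hi (rt_of qa ?Ta)) (lo (rt_of qb ?Tb)) (hi (rt_of qb ?Tb)) (set (leaves ?Ta)) (set (leaves ?Tb))"
          "hi (rt_of q (Nd ?Ta ?Tb)) = NH (Pq qa ?Ta) (Pq qb ?Tb) (lo (rt_of qa ?Ta)) (hi (rt_of qa ?Ta)) (lo (rt_of qb ?Tb)) (hi (rt_of qb ?Tb)) (set (leaves ?Ta)) (set (leaves ?Tb))"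
          by (rule buildE[OF d qa(1) qb(1)])
      have sum: "Pq qa ?Ta + Pq qb ?Tb = 1 + \<tau>" using qa(2) qb(2) by (simp add: algebra_simps)
      have s1: "\<not> Pq qa ?Ta + Pq qb ?Tb \<le> 1" using sum tau by simp
      have e1: "2 - Pq qa ?Ta - Pq qb ?Tb = 1 - \<tau>" using sum by simp
      have e2: "1 - Pq qa ?Ta = (1 - \<tau>) * r" using qa(2) by simp
      have s2: "(1 - Pq qa ?Ta) / (2 - Pq qa ?Ta - Pq qb ?Tb) = r" unfolding e1 e2 using tau by simp
      have P: "Pq q (Nd ?Ta ?Tb) = \<tau>" using q(2) s1 sum by simp
      show ?thesis
        apply (rule exI[of _ q])
        apply (unfold q(3,4))
        apply (unfold NL_gt[OF s1 s2] NH_gt[OF s1])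
        apply (unfold qa(3,4) qb(3,4) LA LB loR hiR)
        apply (insert q(1) P )
        apply simp
        done
    next
      case False
      then have r0: "r = 0 \<or> r = 1" using r01 by auto
      show ?thesis
      proof (cases "r = 1")
        case True
        obtain qa where qa: "qv qa ?Ta" "Pq qa ?Ta = \<tau>" "lo (rt_of qa ?Ta) = lo a" "hi (rt_of qa ?Ta) = hi a"
          using getTf[OF Ra(1)] tau by blast
        obtain qb where qb: "qv qb ?Tb" "(Pq qb ?Tb = 0 \<and> lo (rt_of qb ?Tb) = hi b) \<or> (Pq qb ?Tb = 1 \<and> hi (rt_of qb ?Tb) = hi b)"
          using get01f[OF Rb(3)] by blast
        obtain q where q: "qv q (Nd ?Ta ?Tb)"
          "Pq q (Nd ?Ta ?Tb) = (if Pq qa ?Ta + Pq qb ?Tb \<le> 1 then Pq qa ?Ta + Pq qb ?Tb else Pq qa ?Ta + Pq qb ?Tb - 1)"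
          "lo (rt_of q (Nd ?Ta ?Tb)) = NL (Pq qa ?Ta) (Pq qb ?Tb) (lo (rt_of qa ?Ta)) (hi (rt_of qa ?Ta)) (lo (rt_of qb ?Tb)) (hi (rt_of qb ?Tb)) (set (leaves ?Ta)) (set (leaves ?Tb))"
          "hi (rt_of q (Nd ?Ta ?Tb)) = NH (Pq qa ?Ta) (Pq qb ?Tb) (lo (rt_of qa ?Ta)) (hi (rt_of qa ?Ta)) (lo (rt_of qb ?Tb)) (hi (rt_of qb ?Tb)) (set (leaves ?Ta)) (set (leaves ?Tb))"
          by (rule buildE[OF d qa(1) qb(1)])
        from qb(2) show ?thesis
        proof
          assume b: "Pq qb ?Tb = 0 \<and> lo (rt_of qb ?Tb) = hi b"
          have s1: "Pq qa ?Ta + Pq qb ?Tb \<le> 1" using qa(2) b tau by simp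
          have s2: "Pq qa ?Ta / (Pq qa ?Ta + Pq qb ?Tb) = 1" using qa(2) b tau by simp
          have P: "Pq q (Nd ?Ta ?Tb) = \<tau>" using q(2) s1 qa(2) b by simp
          show ?thesis
            apply (rule exI[of _ q])
            apply (unfold q(3,4))
            apply (unfold NL_le[OF s1] NH_le[OF s1 s2])
            apply (unfold qa(3,4) b[THEN conjunct2] LA LB loR hiR)
            apply (insert q(1) P True)
            apply simp
            done
        next
          assume b: "Pq qb ?Tb = 1 \<and> hi (rt_of qb ?Tb) = hi b"
          have s1: "\<not> Pq qa ?Ta + Pq qb ?Tb \<le> 1" using qa(2) b tau by simp
          have s2: "(1 - Pq qa ?Ta) / (2 - Pq qa ?Ta - Pq qb ?Tb) = 1" using qa(2) b tau by simp
          have P: "Pq q (Nd ?Ta ?Tb) = \<tau>" using q(2) s1 qa(2) b by simp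
          show ?thesis
            apply (rule exI[of _ q])
            apply (unfold q(3,4))
            apply (unfold NL_gt[OF s1 s2] NH_gt[OF s1])
            apply (unfold qa(3,4) b[THEN conjunct2] LA LB loR hiR)
            apply (insert q(1) P True)
            apply simp
            done
        qed
      next
        case False
        then have "r = 0" using r0 by simp
        obtain qa where qa: "qv qa ?Ta" "(Pq qa ?Ta = 0 \<and> lo (rt_of qa ?Ta) = hi a) \<or> (Pq qa ?Ta = 1 \<and> hi (rt_of qa ?Ta) = hi a)"
          using get01f[OF Ra(3)] by blast
        obtain qb where qb: "qv qb ?Tb" "Pq qb ?Tb = \<tau>" "lo (rt_of qb ?Tb) = lo b" "hi (rt_of qb ?Tb) = hi b"
          using getTf[OF Rb(1)] tau by blast
        obtain q where q: "qv q (Nd ?Ta ?Tb)"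
          "Pq q (Nd ?Ta ?Tb) = (if Pq qa ?Ta + Pq qb ?Tb \<le> 1 then Pq qa ?Ta + Pq qb ?Tb else Pq qa ?Ta + Pq qb ?Tb - 1)"
          "lo (rt_of q (Nd ?Ta ?Tb)) = NL (Pq qa ?Ta) (Pq qb ?Tb) (lo (rt_of qa ?Ta)) (hi (rt_of qa ?Ta)) (lo (rt_of qb ?Tb)) (hi (rt_of qb ?Tb)) (set (leaves ?Ta)) (set (leaves ?Tb))"
          "hi (rt_of q (Nd ?Ta ?Tb)) = NH (Pq qa ?Ta) (Pq qb ?Tb) (lo (rt_of qa ?Ta)) (hi (rt_of qa ?Ta)) (lo (rt_of qb ?Tb)) (hi (rt_of qb ?Tb)) (set (leaves ?Ta)) (set (leaves ?Tb))"
          by (rule buildE[OF d qa(1) qb(1)])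
        from qa(2) show ?thesis
        proof
          assume a: "Pq qa ?Ta = 0 \<and> lo (rt_of qa ?Ta) = hi a"
          have s1: "Pq qa ?Ta + Pq qb ?Tb \<le> 1" using qb(2) a tau by simp
          have s2: "Pq qa ?Ta / (Pq qa ?Ta + Pq qb ?Tb) = 0" using qb(2) a tau by simp
          have P: "Pq q (Nd ?Ta ?Tb) = \<tau>" using q(2) s1 qb(2) a by simp
          show ?thesis
            apply (rule exI[of _ q])
            apply (unfold q(3,4))
            apply (unfold NL_le[OF s1] NH_le[OF s1 s2])
            apply (unfold qb(3,4) a[THEN conjunct2] LA LB loR hiR)
            apply (insert q(1) P \<open>r = 0\<close>)
            apply simp
            done
        next
          assume a: "Pq qa ?Ta = 1 \<and> hi (rt_of qa ?Ta) = hi a"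
          have s1: "\<not> Pq qa ?Ta + Pq qb ?Tb \<le> 1" using qb(2) a tau by simp
          have s2: "(1 - Pq qa ?Ta) / (2 - Pq qa ?Ta - Pq qb ?Tb) = 0" using qb(2) a tau by simp
          have P: "Pq q (Nd ?Ta ?Tb) = \<tau>" using q(2) s1 qb(2) a by simp
          show ?thesis
            apply (rule exI[of _ q])
            apply (unfold q(3,4))
            apply (unfold NL_gt[OF s1 s2] NH_gt[OF s1])
            apply (unfold qb(3,4) a[THEN conjunct2] LA LB loR hiR)
            apply (insert q(1) P \<open>r = 0\<close>)
            apply simp
            done
        qed
      qed
    qed
  qed
  show ?thesis using c0 c1 cT by blast
qed


lemma realize: "rvalid R \<Longrightarrow> RealT R \<and> Real01 R (lo R) \<and> Real01 R (hi R)"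
proof (induction R)
  case (RL i)
  then show ?case using real_leaf by blast
next
  case (RN t r a b)
  have va: "rvalid a" and vb: "rvalid b" using RN.prems by auto
  show ?case
  proof (cases t)
    case True
    then have e: "RN t r a b = RN True r a b" by simp
    show ?thesis unfolding e using real_node_T[of r a b] RN.prems RN.IH(1)[OF va] RN.IH(2)[OF vb] e by simp
  next
    case False
    then have e: "RN t r a b = RN False r a b" by simp
    show ?thesis unfolding e using real_node_F[of r a b] RN.prems RN.IH(1)[OF va] RN.IH(2)[OF vb] e by simp
  qed
qed

definition Sel :: "rt \<Rightarrow> bool \<Rightarrow> nat set pmf" where
  "Sel R f = (if f then HiR R else LoR R)"

lemma set_Sel: "A \<in> set_pmf (Sel R f) \<Longrightarrow> A \<subseteq> rleaves R"
  unfolding Sel_def using set_LoR set_HiR by (auto split: if_splits)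

lemma step1:
  assumes v: "rvalid R" and l: "l \<in> rleaves R"
  shows "\<exists>c Y. (\<forall>B. l \<notin> B \<longrightarrow> pmf (Sel R f) (insert l B) = c * pmf Y B) \<and>
    ((rleaves R = {l} \<and> Y = return_pmf {}) \<or> (\<exists>R' f'. rvalid R' \<and> rleaves R' = rleaves R - {l} \<and> Y = Sel R' f'))"
proof (cases "R = RL l")
  case True
  show ?thesis
  proof (cases f)
    case True
    then show ?thesis using \<open>R = RL l\<close>
      by (intro exI[of _ 1] exI[of _ "return_pmf {}"]) (auto simp: Sel_def indicator_def)
  next
    case False
    then show ?thesis using \<open>R = RL l\<close>
      by (intro exI[of _ 0] exI[of _ "return_pmf {}"]) (auto simp: Sel_def indicator_def)
  qed
next
  case False
  obtain R' lam eta where K: "Kp l R R' lam eta" using K_main[OF v l False] by blast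
  have v': "rvalid R'" and L': "rleaves R' = rleaves R - {l}"
    and Klo: "\<And>A. l \<notin> A \<Longrightarrow> lo R (insert l A) = lam * lo R' A" using K unfolding Kp_def by auto
  show ?thesis
  proof (cases f)
    case False
    have "\<forall>B. l \<notin> B \<longrightarrow> pmf (Sel R f) (insert l B) = lam * pmf (Sel R' False) B"
      using Klo False unfolding Sel_def lo_def by simp
    then show ?thesis using v' L' by blast
  next
    case True
    from K consider (c) "\<And>A. l \<notin> A \<Longrightarrow> hi R (insert l A) = eta * hi R' A"
      | (b) "\<And>A. l \<notin> A \<Longrightarrow> hi R (insert l A) = eta * lo R' A"
      unfolding Kp_def by blast
    then show ?thesis
    proof cases
      case c
      have "\<forall>B. l \<notin> B \<longrightarrow> pmf (Sel R f) (insert l B) = eta * pmf (Sel R' True) B"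
        using c True unfolding Sel_def hi_def by simp
      then show ?thesis using v' L' by blast
    next
      case b
      have "\<forall>B. l \<notin> B \<longrightarrow> pmf (Sel R f) (insert l B) = eta * pmf (Sel R' False) B"
        using b True unfolding Sel_def hi_def lo_def by simp
      then show ?thesis using v' L' by blast
    qed
  qed
qed

lemma iterate:
  assumes "finite S"
  shows "rvalid R \<Longrightarrow> S \<subseteq> rleaves R \<Longrightarrow> \<exists>c Y. (\<forall>B. B \<inter> S = {} \<longrightarrow> pmf (Sel R f) (B \<union> S) = c * pmf Y B) \<and>
    ((rleaves R = S \<and> Y = return_pmf {}) \<or> (\<exists>R' f'. rvalid R' \<and> rleaves R' = rleaves R - S \<and> Y = Sel R' f'))"
  using assms
proof (induction S arbitrary: R f rule: finite_induct)
  case empty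
  have "\<forall>B. B \<inter> {} = {} \<longrightarrow> pmf (Sel R f) (B \<union> {}) = 1 * pmf (Sel R f) B" by simp
  moreover have "\<exists>R' f'. rvalid R' \<and> rleaves R' = rleaves R - {} \<and> Sel R f = Sel R' f'" using empty.prems by blast
  ultimately show ?case by blast
next
  case (insert x S)
  have sub: "S \<subseteq> rleaves R" using insert.prems(2) by blast
  obtain c Y where c: "\<forall>B. B \<inter> S = {} \<longrightarrow> pmf (Sel R f) (B \<union> S) = c * pmf Y B"
    and Y: "(rleaves R = S \<and> Y = return_pmf {}) \<or> (\<exists>R' f'. rvalid R' \<and> rleaves R' = rleaves R - S \<and> Y = Sel R' f')"
    using insert.IH[OF insert.prems(1) sub, where f=f] by blast
  have "\<not> (rleaves R = S)" using insert.prems(2) insert.hyps(2) by blast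
  with Y obtain R' f' where v': "rvalid R'" and L': "rleaves R' = rleaves R - S" and Yd: "Y = Sel R' f'"
    by blast
  have xl: "x \<in> rleaves R'" unfolding L' using insert.prems(2) insert.hyps(2) by blast
  obtain c2 Y2 where c2: "\<forall>B. x \<notin> B \<longrightarrow> pmf (Sel R' f') (insert x B) = c2 * pmf Y2 B"
    and Y2: "(rleaves R' = {x} \<and> Y2 = return_pmf {}) \<or> (\<exists>R'' f''. rvalid R'' \<and> rleaves R'' = rleaves R' - {x} \<and> Y2 = Sel R'' f'')"
    using step1[OF v' xl, where f=f'] by blast
  have "\<forall>B. B \<inter> insert x S = {} \<longrightarrow> pmf (Sel R f) (B \<union> insert x S) = (c * c2) * pmf Y2 B"
  proof (intro allI impI)
    fix B assume B: "B \<inter> insert x S = {}"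
    have "B \<union> insert x S = insert x B \<union> S" by auto
    moreover have "insert x B \<inter> S = {}" using B insert.hyps(2) by auto
    moreover have "x \<notin> B" using B by auto
    ultimately show "pmf (Sel R f) (B \<union> insert x S) = (c * c2) * pmf Y2 B"
    proof -
      assume e: "B \<union> insert x S = insert x B \<union> S" and d: "insert x B \<inter> S = {}" and xb: "x \<notin> B"
      have "pmf (Sel R f) (insert x B \<union> S) = c * pmf Y (insert x B)" using c d by blast
      also have "pmf Y (insert x B) = c2 * pmf Y2 B" using c2 Yd xb by blast
      finally show ?thesis unfolding e by simp
    qed
  qed
  moreover have "(rleaves R = insert x S \<and> Y2 = return_pmf {}) \<or> (\<exists>R'' f''. rvalid R'' \<and> rleaves R'' = rleaves R - insert x S \<and> Y2 = Sel R'' f'')"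
    using Y2 L' insert.prems(2) by auto
  ultimately show ?case by blast
qed

lemma condG:
  fixes X Y :: "nat set pmf"
  assumes fL: "finite L" and SL: "S \<subseteq> L"
    and sX: "\<And>A. A \<in> set_pmf X \<Longrightarrow> A \<subseteq> L"
    and sY: "\<And>B. B \<in> set_pmf Y \<Longrightarrow> B \<subseteq> L - S"
    and eq: "\<And>B. B \<inter> S = {} \<Longrightarrow> pmf X (B \<union> S) = c * pmf Y B"
    and pos: "measure_pmf.prob X {A. S \<subseteq> A} > 0"
  shows "cond_pmf X {A. S \<subseteq> A} = map_pmf (\<lambda>B. B \<union> S) Y"
proof -
  let ?E = "{A. S \<subseteq> A}"
  let ?f = "\<lambda>B. B \<union> S"
  have m1: "measure_pmf.prob X ?E = measure_pmf.prob X (?E \<inter> Pow L)"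
    by (rule measure_prob_cong_0) (use sX in \<open>auto simp: pmf_eq_0_set_pmf\<close>)
  have fin: "finite (?E \<inter> Pow L)" using fL by simp
  have img: "?E \<inter> Pow L = ?f ` Pow (L - S)"
  proof (rule equalityI; rule subsetI)
    fix A assume A: "A \<in> ?E \<inter> Pow L"
    then have "A = ?f (A - S)" "A - S \<in> Pow (L - S)" by auto
    then show "A \<in> ?f ` Pow (L - S)" by (rule rev_image_eqI[rotated])
  next
    fix A assume "A \<in> ?f ` Pow (L - S)"
    then show "A \<in> ?E \<inter> Pow L" using SL by auto
  qed
  have inj: "inj_on ?f (Pow (L - S))" by (auto simp: inj_on_def)
  have "measure_pmf.prob X (?E \<inter> Pow L) = sum (pmf X) (?E \<inter> Pow L)"
    using fin by (rule measure_measure_pmf_finite)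
  also have "\<dots> = sum (pmf X \<circ> ?f) (Pow (L - S))" unfolding img by (rule sum.reindex[OF inj])
  also have "\<dots> = sum (\<lambda>B. c * pmf Y B) (Pow (L - S))"
  proof (rule sum.cong[OF refl])
    fix B assume "B \<in> Pow (L - S)"
    then have "B \<inter> S = {}" by auto
    then show "(pmf X \<circ> ?f) B = c * pmf Y B" using eq by simp
  qed
  also have "\<dots> = c * measure_pmf.prob Y (Pow (L - S))"
    using fL by (simp add: sum_distrib_left measure_measure_pmf_finite)
  also have "measure_pmf.prob Y (Pow (L - S)) = measure_pmf.prob Y UNIV"
    by (rule measure_prob_cong_0) (use sY in \<open>auto simp: pmf_eq_0_set_pmf\<close>)
  finally have mc: "measure_pmf.prob X ?E = c" using m1 by simp
  have ne: "set_pmf X \<inter> ?E \<noteq> {}"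
  proof
    assume "set_pmf X \<inter> ?E = {}"
    then have "measure_pmf.prob X ?E = 0" using measure_pmf_zero_iff by blast
    then show False using pos by simp
  qed
  show ?thesis
  proof (rule pmf_eqI)
    fix A
    have lhs: "pmf (cond_pmf X ?E) A = (if A \<in> ?E then pmf X A / c else 0)"
      using pmf_cond[OF ne] mc by simp
    have rhs: "pmf (map_pmf ?f Y) A = measure_pmf.prob Y (?f -` {A})" by (rule pmf_map)
    show "pmf (cond_pmf X ?E) A = pmf (map_pmf ?f Y) A"
    proof (cases "S \<subseteq> A")
      case True
      have "measure_pmf.prob Y (?f -` {A}) = measure_pmf.prob Y {A - S}"
      proof (rule measure_prob_cong_0)
        fix B assume B: "B \<in> ?f -` {A} - {A - S}"
        then have "B \<inter> S \<noteq> {}" by auto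
        then have "B \<notin> set_pmf Y" using sY by blast
        then show "pmf Y B = 0" by (simp add: pmf_eq_0_set_pmf)
      next
        fix B assume "B \<in> {A - S} - ?f -` {A}"
        then show "pmf Y B = 0" using True by auto
      qed
      also have "\<dots> = pmf Y (A - S)" by (rule measure_pmf_single)
      finally have r: "pmf (map_pmf ?f Y) A = pmf Y (A - S)" using rhs by simp
      have "(A - S) \<inter> S = {}" by blast
      then have "pmf X ((A - S) \<union> S) = c * pmf Y (A - S)" by (rule eq)
      moreover have "(A - S) \<union> S = A" using True by blast
      ultimately have "pmf X A = c * pmf Y (A - S)" by simp
      moreover have "c > 0" using pos mc by simp
      ultimately show ?thesis using lhs r True by simp
    next
      case False
      have "?f -` {A} = {}" using False by auto
      then show ?thesis using lhs rhs False by simp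
    qed
  qed
qed

lemma sum_P_int: "distinct (leaves T) \<Longrightarrow> (\<Sum>i\<in>set (leaves T). q i) - Pq q T \<in> \<int>"
proof (induction T)
  case (Lf i)
  then show ?case by simp
next
  case (Nd a b)
  have d: "set (leaves a) \<inter> set (leaves b) = {}" and da: "distinct (leaves a)" and db: "distinct (leaves b)"
    using Nd.prems by auto
  have s: "(\<Sum>i\<in>set (leaves (Nd a b)). q i) = (\<Sum>i\<in>set (leaves a). q i) + (\<Sum>i\<in>set (leaves b). q i)"
    using d by (simp add: sum.union_disjoint)
  have ia: "(\<Sum>i\<in>set (leaves a). q i) - Pq q a \<in> \<int>" using Nd.IH(1)[OF da] .
  have ib: "(\<Sum>i\<in>set (leaves b). q i) - Pq q b \<in> \<int>" using Nd.IH(2)[OF db] .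
  have e: "(\<Sum>i\<in>set (leaves (Nd a b)). q i) - Pq q (Nd a b) =
     ((\<Sum>i\<in>set (leaves a). q i) - Pq q a) + ((\<Sum>i\<in>set (leaves b). q i) - Pq q b) + (if Pq q a + Pq q b \<le> 1 then 0 else 1)"
    unfolding s by simp
  show ?case unfolding e using ia ib by (intro Ints_add) auto
qed

theorem theoremE1:
  fixes n :: nat and T :: "nat btree" and q :: "nat \<Rightarrow> real" and S :: "nat set"
  assumes "distinct (leaves T)"
    and "set (leaves T) = {1..n}"
    and "\<forall>i\<in>{1..n}. 0 \<le> q i \<and> q i \<le> 1"
    and "(\<Sum>i\<in>{1..n}. q i) \<in> \<int>"
    and "S \<subseteq> {1..n}"
    and "measure_pmf.prob (pivotal_sampling q T) {A. S \<subseteq> A} > 0"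
  shows "\<exists>(ts :: nat btree list) (q' :: nat \<Rightarrow> real).
           (\<forall>t\<in>set ts. distinct (leaves t)
               \<and> (\<forall>i\<in>set (leaves t). 0 \<le> q' i \<and> q' i \<le> 1)
               \<and> (\<Sum>i\<in>set (leaves t). q' i) \<in> \<int>)
         \<and> (\<forall>k<length ts. \<forall>l<length ts. k \<noteq> l \<longrightarrow>
               set (leaves (ts ! k)) \<inter> set (leaves (ts ! l)) = {})
         \<and> (\<Union>t\<in>set ts. set (leaves t)) = {1..n} - S
         \<and> map_pmf (\<lambda>A. A - S) (cond_pmf (pivotal_sampling q T) {A. S \<subseteq> A})
             = pivotal_forest q' ts"
proof -
  define R where "R = rt_of q T"
  define f where "f = (Pq q T = 1)"
  have qvT: "qv q T" unfolding qv_def using assms(2,3) by simp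
  have vR: "rvalid R" unfolding R_def using rvalid_rt_of[OF qvT assms(1)] .
  have LR: "rleaves R = {1..n}" unfolding R_def rleaves_rt_of using assms(2) .
  have piv: "pivotal_sampling q T = Sel R f" unfolding pivotal_rt Sel_def R_def f_def by simp
  have finS: "finite S" using assms(5) finite_subset by blast
  have SR: "S \<subseteq> rleaves R" using assms(5) LR by simp
  obtain c Y where eq: "\<forall>B. B \<inter> S = {} \<longrightarrow> pmf (Sel R f) (B \<union> S) = c * pmf Y B"
    and Y: "(rleaves R = S \<and> Y = return_pmf {}) \<or> (\<exists>R' f'. rvalid R' \<and> rleaves R' = rleaves R - S \<and> Y = Sel R' f')"
    using iterate[OF finS vR SR, where f=f] by blast
  have sY: "B \<subseteq> {1..n} - S" if B: "B \<in> set_pmf Y" for B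
    using Y
  proof
    assume "rleaves R = S \<and> Y = return_pmf {}"
    then show ?thesis using B by simp
  next
    assume "\<exists>R' f'. rvalid R' \<and> rleaves R' = rleaves R - S \<and> Y = Sel R' f'"
    then obtain R' f' where "rleaves R' = rleaves R - S" "Y = Sel R' f'" by blast
    then show ?thesis using B set_Sel[of B R' f'] LR by simp
  qed
  have cond: "cond_pmf (pivotal_sampling q T) {A. S \<subseteq> A} = map_pmf (\<lambda>B. B \<union> S) Y"
    unfolding piv
  proof (rule condG[where L = "{1..n}"])
    show "finite {1..n}" by simp
    show "S \<subseteq> {1..n}" by fact
    show "\<And>A. A \<in> set_pmf (Sel R f) \<Longrightarrow> A \<subseteq> {1..n}" using set_Sel LR by blast
    show "\<And>B. B \<in> set_pmf Y \<Longrightarrow> B \<subseteq> {1..n} - S" by (rule sY)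
    show "\<And>B. B \<inter> S = {} \<Longrightarrow> pmf (Sel R f) (B \<union> S) = c * pmf Y B" using eq by blast
    show "measure_pmf.prob (Sel R f) {A. S \<subseteq> A} > 0" using assms(6) piv by simp
  qed
  have mapY: "map_pmf (\<lambda>A. A - S) (cond_pmf (pivotal_sampling q T) {A. S \<subseteq> A}) = Y"
  proof -
    have "map_pmf (\<lambda>A. A - S) (cond_pmf (pivotal_sampling q T) {A. S \<subseteq> A}) = map_pmf (\<lambda>B. (B \<union> S) - S) Y"
      unfolding cond by (simp add: pmf.map_comp o_def)
    also have "\<dots> = map_pmf (\<lambda>B. B) Y"
    proof (rule map_pmf_cong[OF refl])
      fix B assume "B \<in> set_pmf Y"
      then have "B \<inter> S = {}" using sY by blast
      then show "(B \<union> S) - S = B" by blast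
    qed
    finally show ?thesis by simp
  qed
  from Y show ?thesis
  proof
    assume a: "rleaves R = S \<and> Y = return_pmf {}"
    have "{1..n} - S = {}" using a LR by simp
    then show ?thesis using mapY a
      by (intro exI[of _ "[]"] exI[of _ q]) simp
  next
    assume "\<exists>R' f'. rvalid R' \<and> rleaves R' = rleaves R - S \<and> Y = Sel R' f'"
    then obtain R' f' where v': "rvalid R'" and L': "rleaves R' = rleaves R - S" and Yd: "Y = Sel R' f'" by blast
    have re: "Real01 R' (lo R')" "Real01 R' (hi R')" using realize[OF v'] by auto
    obtain qt where qt: "qv qt (shape R')" "Pq qt (shape R') = 0 \<or> Pq qt (shape R') = 1"
      "\<forall>A. pw qt (shape R') A = pmf (Sel R' f') A"
    proof (cases f')
      case True
      then show ?thesis using re(2) that unfolding Real01_def Sel_def hi_def by auto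
    next
      case False
      then show ?thesis using re(1) that unfolding Real01_def Sel_def lo_def by auto
    qed
    let ?t = "shape R'"
    have pivt: "pivotal_sampling qt ?t = Sel R' f'"
      by (rule pmf_eqI) (simp add: pw_pmf qt(3))
    have forest: "pivotal_forest qt [?t] = pivotal_sampling qt ?t"
      by (simp add: bind_return_pmf bind_return_pmf')
    have dt: "distinct (leaves ?t)" using shape_distinct[OF v'] .
    have sumint: "(\<Sum>i\<in>set (leaves ?t). qt i) \<in> \<int>"
    proof -
      have "(\<Sum>i\<in>set (leaves ?t). qt i) - Pq qt ?t \<in> \<int>" by (rule sum_P_int[OF dt])
      moreover have "Pq qt ?t \<in> \<int>" using qt(2) by auto
      ultimately have "(\<Sum>i\<in>set (leaves ?t). qt i) - Pq qt ?t + Pq qt ?t \<in> \<int>" by (rule Ints_add)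
      then show ?thesis by simp
    qed
    have lv: "set (leaves ?t) = {1..n} - S" using shape_leaves[of R'] L' LR by simp
    show ?thesis
    proof (intro exI[of _ "[?t]"] exI[of _ qt] conjI)
      show "\<forall>t\<in>set [?t]. distinct (leaves t) \<and> (\<forall>i\<in>set (leaves t). 0 \<le> qt i \<and> qt i \<le> 1) \<and> (\<Sum>i\<in>set (leaves t). qt i) \<in> \<int>"
        using dt qt(1) sumint unfolding qv_def by simp
      show "\<forall>k<length [?t]. \<forall>l<length [?t]. k \<noteq> l \<longrightarrow> set (leaves ([?t] ! k)) \<inter> set (leaves ([?t] ! l)) = {}"
        by simp
      show "(\<Union>t\<in>set [?t]. set (leaves t)) = {1..n} - S" using lv by simp
      show "map_pmf (\<lambda>A. A - S) (cond_pmf (pivotal_sampling q T) {A. S \<subseteq> A}) = pivotal_forest qt [?t]"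
        unfolding mapY forest pivt Yd ..
    qed
  qed
qed

end
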